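(* Let $\Gamma$ be a competitive population network game, $\beta>0$, $\lambda\ge0$, and let $\sigma^2_{js}\ge0$ ($j\in V$, $s\in S_j$) be the initial variances of the belief components of an initially heterogeneous system. Then $\Gamma$ has a unique QRE $\mathbf{x}^\ast$, and every solution of the mean belief dynamics $$\frac{d\bar{\mu}_{is}}{dt}=\frac{f_{i,s}(\bar{\boldsymbol{\mu}})-\bar{\mu}_{is}}{\lambda+t+1}+\frac{\sum_{j\in V_i}\sum_{s'\in S_j}\frac{\partial^2 f_{i,s}}{\partial\mu_{js'}^2}(\bar{\boldsymbol{\mu}})\,\mathrm{Var}(\mu_{js'})(t)}{2(\lambda+t+1)},\qquad \mathrm{Var}(\mu_{js'})(t)=\Big(\tfrac{\lambda+1}{\lambda+t+1}\Big)^2\sigma^2_{js'},$$ ($i\in V$, $s\in S_i$) with initial mean beliefs $\bar{\boldsymbol{\mu}}(0)\in\prod_{i\in V}\Delta_i$ converges to $\mathbf{x}^\ast$ as $t\to\infty$.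
   Context: A population network game $\Gamma$ consists of a finite undirected graph with vertex set $V=\{1,\dots,n\}$ (populations) and edge set $E$; $V_i=\{j:\{i,j\}\in E\}$. Population $i$ has finite strategy set $S_i$, $\Delta_i\subset\mathbb{R}^{|S_i|}$ is the probability simplex, and each edge $\{i,j\}$ carries payoff matrices $\mathbf{A}_{ij}\in\mathbb{R}^{|S_i|\times|S_j|}$, $\mathbf{A}_{ji}\in\mathbb{R}^{|S_j|\times|S_i|}$. With $r_i(\mathbf{x})=\sum_{j\in V_i}\mathbf{x}_i^\top\mathbf{A}_{ij}\mathbf{x}_j$, $\Gamma$ is competitive (weighted zero-sum) if there exist $\omega_i>0$ with $\sum_{i\in V}\omega_ir_i(\mathbf{x})=0$ for all $\mathbf{x}\in\prod_i\Delta_i$. The logit choice function is $f_{i,s}(\{\boldsymbol{\mu}_j\}_{j\in V_i})=\exp\big(\beta\sum_{j\in V_i}\mathbf{e}_s^\top\mathbf{A}_{ij}\boldsymbol{\mu}_j\big)/\sum_{s'\in S_i}\exp\big(\beta\sum_{j\in V_i}\mathbf{e}_{s'}^\top\mathbf{A}_{ij}\boldsymbol{\mu}_j\big)$ ($\mathbf{e}_s$ the $s$-th unit vector), viewed as a smooth function on $\prod_{j\in V_i}\mathbb{R}^{|S_j|}$; $f_{i,s}(\bar{\boldsymbol{\mu}})$ means $f_{i,s}(\{\bar{\boldsymbol{\mu}}_j\}_{j\in V_i})$. A QRE is $\mathbf{x}^\ast\in\prod_i\Delta_i$ with $x^\ast_{is}=f_{i,s}(\{\mathbf{x}^\ast_j\}_{j\in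 V_i})$ for all $i,s$. In an initially heterogeneous system, $\bar{\boldsymbol{\mu}}_j$ is the mean belief about population $j$ across the system and $\mathrm{Var}(\mu_{js'})$ the variance of the belief component $\mu_{js'}$. *)

theory Defs
  imports "HOL-Analysis.Analysis"
begin

text \<open>Populations are 0..<n; population i has strategies 0..<m i.
  The graph is a symmetric irreflexive relation E on 0..<n.
  Profiles / belief vectors are functions nat => nat => real (population, strategy).\<close>

definition nbrs :: "nat \<Rightarrow> (nat \<Rightarrow> nat \<Rightarrow> bool) \<Rightarrow> nat \<Rightarrow> nat set" where
  "nbrs n E i = {j. j < n \<and> E i j}"

text \<open>Point of the product of simplices (extended by 0 outside the index range,
  so that profiles are uniquely determined).\<close>
definition in_profile :: "nat \<Rightarrow> (nat \<Rightarrow> nat) \<Rightarrow> (nat \<Rightarrow> nat \<Rightarrow> real) \<Rightarrow> bool" where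
  "in_profile n m x \<longleftrightarrow>
     (\<forall>i<n. (\<forall>s<m i. x i s \<ge> 0) \<and> (\<Sum>s<m i. x i s) = 1) \<and>
     (\<forall>i s. (i \<ge> n \<or> s \<ge> m i) \<longrightarrow> x i s = 0)"

definition in_simplices :: "nat \<Rightarrow> (nat \<Rightarrow> nat) \<Rightarrow> (nat \<Rightarrow> nat \<Rightarrow> real) \<Rightarrow> bool" where
  "in_simplices n m x \<longleftrightarrow> (\<forall>i<n. (\<forall>s<m i. x i s \<ge> 0) \<and> (\<Sum>s<m i. x i s) = 1)"

definition payoff :: "nat \<Rightarrow> (nat \<Rightarrow> nat) \<Rightarrow> (nat \<Rightarrow> nat \<Rightarrow> bool)
    \<Rightarrow> (nat \<Rightarrow> nat \<Rightarrow> nat \<Rightarrow> nat \<Rightarrow> real) \<Rightarrow> nat \<Rightarrow> (nat \<Rightarrow> nat \<Rightarrow> real) \<Rightarrow> real" where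
  "payoff n m E A i x =
     (\<Sum>j\<in>nbrs n E i. \<Sum>s<m i. \<Sum>s'<m j. x i s * A i j s s' * x j s')"

definition competitive :: "nat \<Rightarrow> (nat \<Rightarrow> nat) \<Rightarrow> (nat \<Rightarrow> nat \<Rightarrow> bool)
    \<Rightarrow> (nat \<Rightarrow> nat \<Rightarrow> nat \<Rightarrow> nat \<Rightarrow> real) \<Rightarrow> bool" where
  "competitive n m E A \<longleftrightarrow>
     (\<exists>\<omega>::nat \<Rightarrow> real. (\<forall>i<n. \<omega> i > 0) \<and>
        (\<forall>x. in_profile n m x \<longrightarrow> (\<Sum>i<n. \<omega> i * payoff n m E A i x) = 0))"

text \<open>Logit choice function f_{i,s}, as a function of the whole belief array
  (it only depends on the beliefs about neighbours).\<close>
definition logit :: "nat \<Rightarrow> (nat \<Rightarrow> nat) \<Rightarrow> (nat \<Rightarrow> nat \<Rightarrow> bool)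
    \<Rightarrow> (nat \<Rightarrow> nat \<Rightarrow> nat \<Rightarrow> nat \<Rightarrow> real) \<Rightarrow> real \<Rightarrow> nat \<Rightarrow> nat \<Rightarrow> (nat \<Rightarrow> nat \<Rightarrow> real) \<Rightarrow> real" where
  "logit n m E A \<beta> i s mu =
     exp (\<beta> * (\<Sum>j\<in>nbrs n E i. \<Sum>s'<m j. A i j s s' * mu j s')) /
     (\<Sum>s''<m i. exp (\<beta> * (\<Sum>j\<in>nbrs n E i. \<Sum>s'<m j. A i j s'' s' * mu j s')))"

definition is_QRE :: "nat \<Rightarrow> (nat \<Rightarrow> nat) \<Rightarrow> (nat \<Rightarrow> nat \<Rightarrow> bool)
    \<Rightarrow> (nat \<Rightarrow> nat \<Rightarrow> nat \<Rightarrow> nat \<Rightarrow> real) \<Rightarrow> real \<Rightarrow> (nat \<Rightarrow> nat \<Rightarrow> real) \<Rightarrow> bool" where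
  "is_QRE n m E A \<beta> x \<longleftrightarrow> in_profile n m x \<and>
     (\<forall>i<n. \<forall>s<m i. x i s = logit n m E A \<beta> i s x)"

definition upd_comp :: "(nat \<Rightarrow> nat \<Rightarrow> real) \<Rightarrow> nat \<Rightarrow> nat \<Rightarrow> real \<Rightarrow> nat \<Rightarrow> nat \<Rightarrow> real" where
  "upd_comp mu j s' w = mu(j := (mu j)(s' := w))"

definition partial2 :: "((nat \<Rightarrow> nat \<Rightarrow> real) \<Rightarrow> real) \<Rightarrow> (nat \<Rightarrow> nat \<Rightarrow> real) \<Rightarrow> nat \<Rightarrow> nat \<Rightarrow> real" where
  "partial2 F mu j s' = deriv (\<lambda>z. deriv (\<lambda>w. F (upd_comp mu j s' w)) z) (mu j s')"

definition mean_belief_solution :: "nat \<Rightarrow> (nat \<Rightarrow> nat) \<Rightarrow> (nat \<Rightarrow> nat \<Rightarrow> bool)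
    \<Rightarrow> (nat \<Rightarrow> nat \<Rightarrow> nat \<Rightarrow> nat \<Rightarrow> real) \<Rightarrow> real \<Rightarrow> real \<Rightarrow> (nat \<Rightarrow> nat \<Rightarrow> real)
    \<Rightarrow> (real \<Rightarrow> nat \<Rightarrow> nat \<Rightarrow> real) \<Rightarrow> bool" where
  "mean_belief_solution n m E A \<beta> lam \<sigma>2 mu \<longleftrightarrow>
     (\<forall>t\<ge>0. \<forall>i<n. \<forall>s<m i.
        ((\<lambda>\<tau>. mu \<tau> i s) has_real_derivative
           ((logit n m E A \<beta> i s (mu t) - mu t i s) / (lam + t + 1)
            + (\<Sum>j\<in>nbrs n E i. \<Sum>s'<m j.
                 partial2 (logit n m E A \<beta> i s) (mu t) j s'
                 * (((lam + 1) / (lam + t + 1))\<^sup>2 * \<sigma>2 j s'))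
              / (2 * (lam + t + 1))))
        (at t within {0..}))"

end

theory Submission
  imports Defs
begin


locale game =
  fixes n :: nat and m :: "nat \<Rightarrow> nat" and E :: "nat \<Rightarrow> nat \<Rightarrow> bool"
    and A :: "nat \<Rightarrow> nat \<Rightarrow> nat \<Rightarrow> nat \<Rightarrow> real" and \<beta> :: real and \<omega> :: "nat \<Rightarrow> real"
  assumes m_pos: "\<And>i. i < n \<Longrightarrow> m i > 0"
    and beta_pos: "\<beta> > 0"
    and om_pos: "\<And>i. i < n \<Longrightarrow> \<omega> i > 0"
    and zs: "\<And>x. in_profile n m x \<Longrightarrow> (\<Sum>i<n. \<omega> i * payoff n m E A i x) = 0"
begin

abbreviation N where "N i \<equiv> nbrs n E i"

definition u :: "nat \<Rightarrow> nat \<Rightarrow> (nat \<Rightarrow> nat \<Rightarrow> real) \<Rightarrow> real" where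
  "u i s x = (\<Sum>j\<in>N i. \<Sum>s'<m j. A i j s s' * x j s')"

definition Z :: "nat \<Rightarrow> (nat \<Rightarrow> nat \<Rightarrow> real) \<Rightarrow> real" where
  "Z i x = (\<Sum>s<m i. exp (\<beta> * u i s x))"

abbreviation f where "f i s x \<equiv> logit n m E A \<beta> i s x"

lemma f_def': "f i s x = exp (\<beta> * u i s x) / Z i x"
  by (simp add: logit_def u_def Z_def)

lemma N_sub: "N i \<subseteq> {..<n}"
  by (auto simp: nbrs_def)

lemma finite_N[simp]: "finite (N i)"
  using N_sub finite_subset by blast

lemma N_lt: "j \<in> N i \<Longrightarrow> j < n"
  using N_sub by blast

lemma Z_pos: "i < n \<Longrightarrow> Z i x > 0"
  unfolding Z_def using m_pos[of i]
  by (intro sum_pos) auto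

lemma f_pos: "i < n \<Longrightarrow> f i s x > 0"
  using Z_pos by (simp add: f_def')

lemma f_sum: "i < n \<Longrightarrow> (\<Sum>s<m i. f i s x) = 1"
  using Z_pos[of i x] by (simp add: f_def' sum_divide_distrib[symmetric] Z_def)

lemma f_le1: "i < n \<Longrightarrow> s < m i \<Longrightarrow> f i s x \<le> 1"
proof -
  assume a: "i < n" "s < m i"
  have "f i s x \<le> (\<Sum>s<m i. f i s x)"
    using a f_pos by (intro member_le_sum) (auto intro: less_imp_le)
  then show ?thesis using f_sum a by simp
qed

lemma ln_f: "i < n \<Longrightarrow> ln (f i s x) = \<beta> * u i s x - ln (Z i x)"
  using Z_pos[of i x] by (simp add: f_def' ln_div)

definition B :: "(nat \<Rightarrow> nat \<Rightarrow> real) \<Rightarrow> (nat \<Rightarrow> nat \<Rightarrow> real) \<Rightarrow> real" where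
  "B a b = (\<Sum>i<n. \<omega> i * (\<Sum>s<m i. a i s * u i s b))"

lemma payoff_eq: "payoff n m E A i x = (\<Sum>s<m i. x i s * u i s x)"
  unfolding payoff_def u_def
  by (subst sum.swap) (simp add: sum_distrib_left mult.assoc)

lemma Bxx_profile: "in_profile n m x \<Longrightarrow> B x x = 0"
  using zs[of x] by (simp add: B_def payoff_eq)

definition rs :: "(nat \<Rightarrow> nat \<Rightarrow> real) \<Rightarrow> nat \<Rightarrow> nat \<Rightarrow> real" where
  "rs x = (\<lambda>i s. if i < n \<and> s < m i then x i s else 0)"

lemma in_profile_rs: "in_simplices n m x \<Longrightarrow> in_profile n m (rs x)"
  unfolding in_profile_def in_simplices_def rs_def by auto

lemma u_rs: "u i s (rs x) = u i s x"
  unfolding u_def rs_def using N_lt by (intro sum.cong refl) auto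

lemma B_rs: "B (rs a) (rs b) = B a b"
  unfolding B_def u_rs by (auto simp: rs_def intro!: sum.cong)

lemma Bxx: "in_simplices n m x \<Longrightarrow> B x x = 0"
  using Bxx_profile[OF in_profile_rs, of x] B_rs by simp

lemma u_lin: "u i s (\<lambda>j s'. p * a j s' + q * b j s') = p * u i s a + q * u i s b"
  unfolding u_def by (simp add: sum.distrib sum_distrib_left algebra_simps)

lemma u_diff: "u i s (\<lambda>j s'. a j s' - b j s') = u i s a - u i s b"
  unfolding u_def by (simp add: sum_subtractf algebra_simps)

lemma B_lin_left: "B (\<lambda>i s. p * a i s + q * b i s) c = p * B a c + q * B b c"
  unfolding B_def by (simp add: sum.distrib sum_distrib_left algebra_simps)

lemma B_lin_right: "B c (\<lambda>i s. p * a i s + q * b i s) = p * B c a + q * B c b"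
  unfolding B_def by (simp add: u_lin sum.distrib sum_distrib_left algebra_simps)

lemma B_anti: assumes "in_simplices n m a" "in_simplices n m b"
  shows "B a b + B b a = 0"
proof -
  let ?c = "\<lambda>i s. (1/2) * a i s + (1/2) * b i s"
  have "in_simplices n m ?c"
    using assms unfolding in_simplices_def by (auto simp: sum.distrib sum_divide_distrib[symmetric])
  then have "B ?c ?c = 0" by (rule Bxx)
  also have "B ?c ?c = (1/2) * ((1/2) * B a a + (1/2) * B a b) + (1/2) * ((1/2) * B b a + (1/2) * B b b)"
    apply (subst B_lin_left)
    apply (subst B_lin_right)+
    by simp
  finally show ?thesis using Bxx[OF assms(1)] Bxx[OF assms(2)] by simp
qed

end


lemma kl_scalar:
  fixes a b :: real assumes a: "0 < a" and b: "0 < b"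
  shows "a - b + (sqrt a - sqrt b)^2 \<le> a * (ln a - ln b)"
proof -
  have sa: "sqrt a > 0" and sb: "sqrt b > 0" using a b by auto
  have "ln (sqrt b / sqrt a) \<le> sqrt b / sqrt a - 1"
    using sa sb by (intro ln_le_minus_one) auto
  moreover have "ln (sqrt b / sqrt a) = (ln b - ln a) / 2"
    using a b by (simp add: ln_div ln_sqrt)
  ultimately have "ln b - ln a \<le> 2 * (sqrt b / sqrt a - 1)" using sa by (simp add: field_simps)
  then have "a * (ln b - ln a) \<le> a * (2 * (sqrt b / sqrt a - 1))"
    using a by (intro mult_left_mono) auto
  also have "a * (2 * (sqrt b / sqrt a - 1)) = 2 * sqrt a * sqrt b - 2 * a"
    using sa by (simp add: field_simps)
  finally have "a * (ln b - ln a) \<le> 2 * sqrt a * sqrt b - 2 * a" .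
  moreover have "(sqrt a - sqrt b)^2 = a + b - 2 * sqrt a * sqrt b"
    using a b by (simp add: power2_diff)
  ultimately show ?thesis by (simp add: algebra_simps)
qed

lemma sq_sqrt_le:
  fixes a b :: real assumes "0 \<le> a" "a \<le> 1" "0 \<le> b" "b \<le> 1"
  shows "(a - b)^2 \<le> 4 * (sqrt a - sqrt b)^2"
proof -
  have e: "a - b = (sqrt a - sqrt b) * (sqrt a + sqrt b)"
    using assms by (simp add: algebra_simps)
  have "sqrt a + sqrt b \<le> 2" using assms by (smt (verit) real_sqrt_le_1_iff)
  moreover have "0 \<le> sqrt a + sqrt b" using assms by simp
  ultimately have "(sqrt a + sqrt b)^2 \<le> 2^2" by (intro power_mono) auto
  then have "(a - b)^2 = (sqrt a - sqrt b)^2 * (sqrt a + sqrt b)^2 \<and> (sqrt a - sqrt b)^2 * (sqrt a + sqrt b)^2 \<le> (sqrt a - sqrt b)^2 * 4"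
    by (simp add: e power_mult_distrib mult_left_mono)
  then show ?thesis by simp
qed

lemma ln_mono_sq:
  fixes a b :: real assumes "0 < a" "a \<le> 1" "0 < b" "b \<le> 1"
  shows "(a - b)^2 \<le> (a - b) * (ln a - ln b)"
proof -
  have key: "(p - q)^2 \<le> (p - q) * (ln p - ln q)" if "0 < q" "q \<le> p" "p \<le> 1" for p q :: real
  proof -
    have "ln (q / p) \<le> q / p - 1" using that by (intro ln_le_minus_one) auto
    then have "ln p - ln q \<ge> (p - q) / p" using that by (simp add: ln_div field_simps)
    moreover have "(p - q) / p \<ge> p - q"
    proof -
      have "(p - q) * p \<le> (p - q) * 1" using that by (intro mult_left_mono) auto
      then show ?thesis using that by (simp add: field_simps)
    qed
    ultimately have "ln p - ln q \<ge> p - q" by linarith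
    then have "(p - q) * (p - q) \<le> (p - q) * (ln p - ln q)"
      using that by (intro mult_left_mono) auto
    then show ?thesis by (simp add: power2_eq_square)
  qed
  show ?thesis
  proof (cases "b \<le> a")
    case True then show ?thesis using key assms by auto
  next
    case False
    then have "(b - a)^2 \<le> (b - a) * (ln b - ln a)" using key assms by auto
    then show ?thesis by (simp add: power2_commute algebra_simps)
  qed
qed

lemma ln_lip:
  fixes a b d :: real assumes "0 < d" "d \<le> a" "d \<le> b"
  shows "\<bar>ln a - ln b\<bar> \<le> \<bar>a - b\<bar> / d"
proof -
  have key: "ln p - ln q \<le> (p - q) / d" if "d \<le> q" "q \<le> p" for p q :: real
  proof -
    have "ln (p / q) \<le> p / q - 1" using that assms by (intro ln_le_minus_one) auto
    then have "ln p - ln q \<le> (p - q) / q" using that assms by (simp add: ln_div field_simps)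
    also have "\<dots> \<le> (p - q) / d" using that assms by (intro divide_left_mono) auto
    finally show ?thesis .
  qed
  show ?thesis
  proof (cases "b \<le> a")
    case True
    then have "0 \<le> ln a - ln b" using assms by simp
    then show ?thesis using key[of b a] True assms by auto
  next
    case False
    then have "0 \<le> ln b - ln a" using assms by simp
    then show ?thesis using key[of a b] False assms by auto
  qed
qed


context game
begin

definition V :: "(nat \<Rightarrow> nat \<Rightarrow> real) \<Rightarrow> real" where
  "V x = (\<Sum>i<n. \<omega> i * (ln (Z i x) + (\<Sum>s<m i. x i s * ln (x i s))))"

definition DV :: "(nat \<Rightarrow> nat \<Rightarrow> real) \<Rightarrow> (nat \<Rightarrow> nat \<Rightarrow> real) \<Rightarrow> real" where
  "DV x y = (\<Sum>i<n. \<omega> i * (\<beta> * (\<Sum>s<m i. f i s x * u i s y) + (\<Sum>s<m i. y i s * (ln (x i s) + 1))))"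

lemma u_deriv:
  assumes "\<And>j s'. j < n \<Longrightarrow> s' < m j \<Longrightarrow> ((\<lambda>\<tau>. x \<tau> j s') has_real_derivative x' j s') (at t within S)"
  shows "((\<lambda>\<tau>. u i s (x \<tau>)) has_real_derivative u i s x') (at t within S)"
  unfolding u_def
  by (intro DERIV_sum DERIV_cmult assms) (auto dest: N_lt)

lemma V_deriv:
  assumes d: "\<And>j s'. j < n \<Longrightarrow> s' < m j \<Longrightarrow> ((\<lambda>\<tau>. x \<tau> j s') has_real_derivative x' j s') (at t within S)"
    and pos: "\<And>j s'. j < n \<Longrightarrow> s' < m j \<Longrightarrow> x t j s' > 0"
  shows "((\<lambda>\<tau>. V (x \<tau>)) has_real_derivative DV (x t) x') (at t within S)"
proof -
  have Zd: "((\<lambda>\<tau>. Z i (x \<tau>)) has_real_derivative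
      (\<Sum>s<m i. exp (\<beta> * u i s (x t)) * (\<beta> * u i s x'))) (at t within S)" for i
    unfolding Z_def
    by (intro DERIV_sum DERIV_chain2[OF DERIV_exp] DERIV_cmult u_deriv d)
  have h1: "((\<lambda>\<tau>. ln (Z i (x \<tau>))) has_real_derivative
      (\<beta> * (\<Sum>s<m i. f i s (x t) * u i s x'))) (at t within S)" if i: "i < n" for i
    apply (rule DERIV_cong[OF DERIV_chain2[OF DERIV_ln_divide[OF Z_pos[OF i]] Zd]])
    using Z_pos[OF i, of "x t"]
    by (simp add: f_def' sum_distrib_left sum_divide_distrib field_simps)
  have h2: "((\<lambda>\<tau>. x \<tau> i s * ln (x \<tau> i s)) has_real_derivative x' i s * (ln (x t i s) + 1)) (at t within S)"
    if i: "i < n" "s < m i" for i s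
    apply (rule DERIV_cong[OF DERIV_mult[OF d DERIV_chain2[OF DERIV_ln_divide[OF pos] d]]])
    using i pos[OF i] by (auto simp: field_simps)
  show ?thesis
    unfolding V_def DV_def
    by (intro DERIV_sum DERIV_cmult DERIV_add h1 h2) auto
qed

lemma in_simplices_f: "in_simplices n m (\<lambda>i s. f i s x)"
  unfolding in_simplices_def using f_pos f_sum by (auto intro: less_imp_le)

definition Dd :: "(nat \<Rightarrow> nat \<Rightarrow> real) \<Rightarrow> real" where
  "Dd x = (\<Sum>i<n. \<omega> i * (\<Sum>s<m i. (f i s x - x i s) * (ln (f i s x) - ln (x i s))))"

lemma B_diff_right: "B c (\<lambda>i s. a i s - b i s) = B c a - B c b"
  unfolding B_def by (simp add: u_diff sum_subtractf algebra_simps)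

lemma sum_lnf: assumes x: "in_simplices n m x" and i: "i < n"
  shows "(\<Sum>s<m i. (f i s x - x i s) * ln (f i s x)) = \<beta> * ((\<Sum>s<m i. f i s x * u i s x) - (\<Sum>s<m i. x i s * u i s x))"
proof -
  have sx: "(\<Sum>s<m i. x i s) = 1" using x i by (simp add: in_simplices_def)
  have "(\<Sum>s<m i. (f i s x - x i s) * ln (f i s x)) =
        (\<Sum>s<m i. \<beta> * (f i s x * u i s x - x i s * u i s x) - ln (Z i x) * (f i s x - x i s))"
    by (intro sum.cong refl) (simp add: ln_f[OF i] algebra_simps)
  also have "\<dots> = \<beta> * ((\<Sum>s<m i. f i s x * u i s x) - (\<Sum>s<m i. x i s * u i s x))
       - ln (Z i x) * ((\<Sum>s<m i. f i s x) - (\<Sum>s<m i. x i s))"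
    by (simp only: sum_subtractf sum_distrib_left right_diff_distrib)
  finally show ?thesis using sx f_sum[OF i] by simp
qed

lemma BFx: assumes x: "in_simplices n m x"
  shows "(\<Sum>i<n. \<omega> i * (\<Sum>s<m i. (f i s x - x i s) * ln (f i s x))) = \<beta> * B (\<lambda>i s. f i s x) x"
proof -
  have "(\<Sum>i<n. \<omega> i * (\<Sum>s<m i. (f i s x - x i s) * ln (f i s x))) =
     (\<Sum>i<n. \<omega> i * (\<beta> * ((\<Sum>s<m i. f i s x * u i s x) - (\<Sum>s<m i. x i s * u i s x))))"
    using sum_lnf[OF x] by simp
  also have "\<dots> = \<beta> * (B (\<lambda>i s. f i s x) x - B x x)"
    by (simp add: B_def sum_subtractf sum_distrib_left algebra_simps)
  finally show ?thesis using Bxx[OF x] by simp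
qed

lemma DV_flow:
  assumes x: "in_simplices n m x"
  shows "DV x (\<lambda>i s. g * (f i s x - x i s) + 1 * p i s) =
     - g * Dd x + (\<beta> * B (\<lambda>i s. f i s x) p + (\<Sum>i<n. \<omega> i * (\<Sum>s<m i. p i s * (ln (x i s) + 1))))"
proof -
  let ?F = "\<lambda>i s. f i s x"
  have "(\<Sum>i<n. \<omega> i * (\<beta> * (\<Sum>s<m i. f i s x * u i s (\<lambda>i s. g * (f i s x - x i s) + 1 * p i s))))
      = \<beta> * B ?F (\<lambda>i s. g * (f i s x - x i s) + 1 * p i s)"
    by (simp add: B_def sum_distrib_left algebra_simps)
  also have "\<dots> = \<beta> * (g * (B ?F ?F - B ?F x) + B ?F p)"
    by (subst B_lin_right) (simp add: B_diff_right)
  also have "\<dots> = \<beta> * (- g * B ?F x + B ?F p)"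
    using Bxx[OF in_simplices_f] by simp
  finally have e1: "(\<Sum>i<n. \<omega> i * (\<beta> * (\<Sum>s<m i. f i s x * u i s (\<lambda>i s. g * (f i s x - x i s) + 1 * p i s))))
      = \<beta> * (- g * B ?F x + B ?F p)" .
  have e2: "(\<Sum>s<m i. (g * (f i s x - x i s) + 1 * p i s) * (ln (x i s) + 1)) =
      g * (\<Sum>s<m i. (f i s x - x i s) * ln (x i s)) + (\<Sum>s<m i. p i s * (ln (x i s) + 1))" if i: "i < n" for i
  proof -
    have "(\<Sum>s<m i. (g * (f i s x - x i s) + 1 * p i s) * (ln (x i s) + 1)) =
      g * (\<Sum>s<m i. (f i s x - x i s) * ln (x i s)) + g * ((\<Sum>s<m i. f i s x) - (\<Sum>s<m i. x i s))
      + (\<Sum>s<m i. p i s * (ln (x i s) + 1))"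
      by (simp add: sum.distrib sum_subtractf sum_distrib_left algebra_simps)
    then show ?thesis using f_sum[OF i] x i by (simp add: in_simplices_def)
  qed
  have "DV x (\<lambda>i s. g * (f i s x - x i s) + 1 * p i s) =
     (\<Sum>i<n. \<omega> i * (\<beta> * (\<Sum>s<m i. f i s x * u i s (\<lambda>i s. g * (f i s x - x i s) + 1 * p i s))))
     + (\<Sum>i<n. \<omega> i * (\<Sum>s<m i. (g * (f i s x - x i s) + 1 * p i s) * (ln (x i s) + 1)))"
    unfolding DV_def by (simp add: sum.distrib algebra_simps)
  also have "(\<Sum>i<n. \<omega> i * (\<Sum>s<m i. (g * (f i s x - x i s) + 1 * p i s) * (ln (x i s) + 1)))
     = g * (\<Sum>i<n. \<omega> i * (\<Sum>s<m i. (f i s x - x i s) * ln (x i s))) + (\<Sum>i<n. \<omega> i * (\<Sum>s<m i. p i s * (ln (x i s) + 1)))"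
    using e2 by (simp add: sum.distrib sum_distrib_left algebra_simps)
  finally have dv: "DV x (\<lambda>i s. g * (f i s x - x i s) + 1 * p i s) =
     \<beta> * (- g * B ?F x + B ?F p) + g * (\<Sum>i<n. \<omega> i * (\<Sum>s<m i. (f i s x - x i s) * ln (x i s)))
      + (\<Sum>i<n. \<omega> i * (\<Sum>s<m i. p i s * (ln (x i s) + 1)))"
    using e1 by simp
  have dd: "Dd x = \<beta> * B ?F x - (\<Sum>i<n. \<omega> i * (\<Sum>s<m i. (f i s x - x i s) * ln (x i s)))"
    unfolding Dd_def BFx[OF x, symmetric]
    by (simp add: sum_subtractf sum.distrib sum_distrib_left algebra_simps)
  show ?thesis unfolding dv dd by (simp add: algebra_simps)
qed

end


context game
begin

lemma single_le:
  assumes h: "\<And>i s. i < n \<Longrightarrow> s < m i \<Longrightarrow> 0 \<le> h i s" and i: "i < n" "s < m i"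
  shows "\<omega> i * h i s \<le> (\<Sum>i<n. \<omega> i * (\<Sum>s<m i. h i s))"
proof -
  have "h i s \<le> (\<Sum>s<m i. h i s)" using h i by (intro member_le_sum) auto
  then have "\<omega> i * h i s \<le> \<omega> i * (\<Sum>s<m i. h i s)" using om_pos[OF i(1)] by (intro mult_left_mono) auto
  also have "\<dots> \<le> (\<Sum>i<n. \<omega> i * (\<Sum>s<m i. h i s))"
  proof -
    have nn: "0 \<le> \<omega> j * (\<Sum>s<m j. h j s)" if "j < n" for j
      using om_pos[OF that] h[OF that] by (intro mult_nonneg_nonneg sum_nonneg) auto
    show ?thesis using i nn by (intro member_le_sum[where f = "\<lambda>i. \<omega> i * (\<Sum>s<m i. h i s)"]) auto
  qed
  finally show ?thesis .
qed

lemma om_nonneg: "i < n \<Longrightarrow> 0 \<le> \<omega> i"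
  using om_pos less_imp_le by blast

lemma wsum_nonneg: "(\<And>i. i < n \<Longrightarrow> 0 \<le> h i) \<Longrightarrow> 0 \<le> (\<Sum>i<n. \<omega> i * h i)"
  by (intro sum_nonneg mult_nonneg_nonneg) (auto simp: om_nonneg)

definition posK :: "(nat \<Rightarrow> nat \<Rightarrow> real) \<Rightarrow> bool" where
  "posK x \<longleftrightarrow> (\<forall>i<n. \<forall>s<m i. x i s > 0)"

lemma x_le1: "in_simplices n m x \<Longrightarrow> i < n \<Longrightarrow> s < m i \<Longrightarrow> x i s \<le> 1"
proof -
  assume a: "in_simplices n m x" "i < n" "s < m i"
  have "x i s \<le> (\<Sum>s<m i. x i s)" using a by (intro member_le_sum) (auto simp: in_simplices_def)
  then show ?thesis using a by (simp add: in_simplices_def)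
qed

definition KLi :: "nat \<Rightarrow> (nat \<Rightarrow> nat \<Rightarrow> real) \<Rightarrow> real" where
  "KLi i x = (\<Sum>s<m i. x i s * (ln (x i s) - ln (f i s x)))"

lemma KLi_ge:
  assumes x: "in_simplices n m x" "posK x" and i: "i < n"
  shows "(\<Sum>s<m i. (sqrt (x i s) - sqrt (f i s x))^2) \<le> KLi i x"
proof -
  have "(\<Sum>s<m i. x i s - f i s x + (sqrt (x i s) - sqrt (f i s x))^2) \<le> KLi i x"
    unfolding KLi_def using x i f_pos[OF i] by (intro sum_mono kl_scalar) (auto simp: posK_def)
  moreover have "(\<Sum>s<m i. x i s - f i s x + (sqrt (x i s) - sqrt (f i s x))^2)
     = ((\<Sum>s<m i. x i s) - (\<Sum>s<m i. f i s x)) + (\<Sum>s<m i. (sqrt (x i s) - sqrt (f i s x))^2)"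
    by (simp add: sum.distrib sum_subtractf)
  ultimately show ?thesis using x i f_sum[OF i] by (simp add: in_simplices_def)
qed

lemma KLi_ge_sq:
  assumes x: "in_simplices n m x" "posK x" and i: "i < n" "s < m i"
  shows "(x i s - f i s x)^2 / 4 \<le> KLi i x"
proof -
  have "(x i s - f i s x)^2 \<le> 4 * (sqrt (x i s) - sqrt (f i s x))^2"
    using x i f_pos[OF i(1)] f_le1[OF i] x_le1[OF x(1) i]
    by (intro sq_sqrt_le) (auto simp: posK_def less_imp_le)
  moreover have "(sqrt (x i s) - sqrt (f i s x))^2 \<le> (\<Sum>s<m i. (sqrt (x i s) - sqrt (f i s x))^2)"
    using i by (intro member_le_sum) auto
  ultimately show ?thesis using KLi_ge[OF x i(1)] by simp
qed

lemma KLi_nonneg: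
  assumes x: "in_simplices n m x" "posK x" and i: "i < n"
  shows "0 \<le> KLi i x"
  using KLi_ge[OF x i] by (smt (verit) sum_nonneg zero_le_power2)

lemma V_KL:
  assumes x: "in_simplices n m x"
  shows "V x = (\<Sum>i<n. \<omega> i * KLi i x)"
proof -
  have "KLi i x = (\<Sum>s<m i. x i s * ln (x i s)) - \<beta> * (\<Sum>s<m i. x i s * u i s x) + ln (Z i x)"
    if i: "i < n" for i
  proof -
    have "KLi i x = (\<Sum>s<m i. x i s * ln (x i s) - \<beta> * (x i s * u i s x) + ln (Z i x) * x i s)"
      unfolding KLi_def by (intro sum.cong refl) (simp add: ln_f[OF i] algebra_simps)
    also have "\<dots> = (\<Sum>s<m i. x i s * ln (x i s)) - \<beta> * (\<Sum>s<m i. x i s * u i s x) + ln (Z i x) * (\<Sum>s<m i. x i s)"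
      by (simp add: sum.distrib sum_subtractf sum_distrib_left)
    finally show ?thesis using x i by (simp add: in_simplices_def)
  qed
  then have "(\<Sum>i<n. \<omega> i * KLi i x) =
     (\<Sum>i<n. \<omega> i * ((\<Sum>s<m i. x i s * ln (x i s)) - \<beta> * (\<Sum>s<m i. x i s * u i s x) + ln (Z i x)))"
    by simp
  also have "\<dots> = V x - \<beta> * B x x"
    unfolding V_def B_def by (simp add: sum.distrib sum_subtractf sum_distrib_left algebra_simps)
  finally show ?thesis using Bxx[OF x] by simp
qed

lemma V_nonneg: "in_simplices n m x \<Longrightarrow> posK x \<Longrightarrow> 0 \<le> V x"
proof -
  assume x: "in_simplices n m x" "posK x"
  show ?thesis unfolding V_KL[OF x(1)] by (rule wsum_nonneg) (rule KLi_nonneg[OF x])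
qed

lemma V_ge_sq:
  assumes x: "in_simplices n m x" "posK x" and i: "i < n" "s < m i"
  shows "\<omega> i * (x i s - f i s x)^2 / 4 \<le> V x"
proof -
  have "\<omega> i * ((x i s - f i s x)^2 / 4) \<le> \<omega> i * KLi i x"
    using KLi_ge_sq[OF x i] om_pos[OF i(1)] by (intro mult_left_mono) auto
  also have "\<dots> \<le> (\<Sum>i<n. \<omega> i * KLi i x)"
    using i by (intro member_le_sum[where f = "\<lambda>i. \<omega> i * KLi i x"])
      (auto intro!: mult_nonneg_nonneg simp: om_nonneg KLi_nonneg[OF x])
  finally show ?thesis using V_KL[OF x(1)] by simp
qed

lemma Dd_ge_V:
  assumes x: "in_simplices n m x" "posK x"
  shows "V x \<le> Dd x"
proof -
  have "Dd x - (\<Sum>i<n. \<omega> i * KLi i x) = (\<Sum>i<n. \<omega> i * (\<Sum>s<m i. f i s x * (ln (f i s x) - ln (x i s))))"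
  proof -
    have "Dd x - (\<Sum>i<n. \<omega> i * KLi i x) = (\<Sum>i<n. \<omega> i * ((\<Sum>s<m i. (f i s x - x i s) * (ln (f i s x) - ln (x i s))) - KLi i x))"
      unfolding Dd_def by (simp only: right_diff_distrib sum_subtractf)
    also have "\<dots> = (\<Sum>i<n. \<omega> i * (\<Sum>s<m i. f i s x * (ln (f i s x) - ln (x i s))))"
      unfolding KLi_def by (intro sum.cong refl arg_cong2[where f="(*)"]) (simp add: sum_subtractf[symmetric] algebra_simps)
    finally show ?thesis .
  qed
  moreover have "0 \<le> (\<Sum>s<m i. f i s x * (ln (f i s x) - ln (x i s)))" if i: "i < n" for i
  proof -
    have "(\<Sum>s<m i. f i s x - x i s + (sqrt (f i s x) - sqrt (x i s))^2) \<le> (\<Sum>s<m i. f i s x * (ln (f i s x) - ln (x i s)))"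
      using x i f_pos[OF i] by (intro sum_mono kl_scalar) (auto simp: posK_def)
    moreover have "(\<Sum>s<m i. f i s x - x i s + (sqrt (f i s x) - sqrt (x i s))^2)
      = ((\<Sum>s<m i. f i s x) - (\<Sum>s<m i. x i s)) + (\<Sum>s<m i. (sqrt (f i s x) - sqrt (x i s))^2)"
      by (simp add: sum.distrib sum_subtractf)
    moreover have "0 \<le> (\<Sum>s<m i. (sqrt (f i s x) - sqrt (x i s))^2)" by (intro sum_nonneg) auto
    ultimately show ?thesis using x i f_sum[OF i] by (simp add: in_simplices_def)
  qed
  ultimately have "0 \<le> Dd x - (\<Sum>i<n. \<omega> i * KLi i x)"
    by (simp add: wsum_nonneg)
  then show ?thesis using V_KL[OF x(1)] by simp
qed

lemma QRE_ident:
  assumes x: "in_simplices n m x" and xs: "in_simplices n m xs"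
    and fx: "\<And>i s. i < n \<Longrightarrow> s < m i \<Longrightarrow> xs i s = f i s xs"
  shows "(\<Sum>i<n. \<omega> i * (\<Sum>s<m i. (x i s - xs i s) * (ln (f i s x) - ln (xs i s)))) = 0"
proof -
  have "(\<Sum>s<m i. (x i s - xs i s) * (ln (f i s x) - ln (xs i s))) =
        \<beta> * (\<Sum>s<m i. (x i s - xs i s) * (u i s x - u i s xs))" if i: "i < n" for i
  proof -
    have "(\<Sum>s<m i. (x i s - xs i s) * (ln (f i s x) - ln (xs i s))) =
      (\<Sum>s<m i. \<beta> * ((x i s - xs i s) * (u i s x - u i s xs)) - (ln (Z i x) - ln (Z i xs)) * (x i s - xs i s))"
      by (intro sum.cong refl) (simp add: fx[OF i] ln_f[OF i] algebra_simps)
    also have "\<dots> = \<beta> * (\<Sum>s<m i. (x i s - xs i s) * (u i s x - u i s xs))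
        - (ln (Z i x) - ln (Z i xs)) * ((\<Sum>s<m i. x i s) - (\<Sum>s<m i. xs i s))"
      by (simp only: sum_subtractf sum_distrib_left right_diff_distrib)
    finally show ?thesis using x xs i by (simp add: in_simplices_def)
  qed
  then have "(\<Sum>i<n. \<omega> i * (\<Sum>s<m i. (x i s - xs i s) * (ln (f i s x) - ln (xs i s)))) =
     \<beta> * (\<Sum>i<n. \<omega> i * (\<Sum>s<m i. (x i s - xs i s) * (u i s x - u i s xs)))"
    by (simp add: sum_distrib_left algebra_simps)
  also have "(\<Sum>i<n. \<omega> i * (\<Sum>s<m i. (x i s - xs i s) * (u i s x - u i s xs))) =
     B x x - B x xs - (B xs x - B xs xs)"
    unfolding B_def by (simp add: sum_subtractf sum.distrib sum_distrib_left algebra_simps)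
  finally show ?thesis using Bxx[OF x] Bxx[OF xs] B_anti[OF x xs] by simp
qed

lemma QRE_close:
  assumes x: "in_simplices n m x" "posK x" and xs: "in_simplices n m xs" "posK xs"
    and fx: "\<And>i s. i < n \<Longrightarrow> s < m i \<Longrightarrow> xs i s = f i s xs"
    and d: "d > 0" "\<And>i s. i < n \<Longrightarrow> s < m i \<Longrightarrow> d \<le> x i s" "\<And>i s. i < n \<Longrightarrow> s < m i \<Longrightarrow> d \<le> f i s x"
    and i: "i < n" "s < m i"
  shows "\<omega> i * (x i s - xs i s)^2 \<le> (\<Sum>i<n. \<omega> i * (\<Sum>s<m i. \<bar>x i s - f i s x\<bar>)) / d"
proof -
  have "\<omega> i * (x i s - xs i s)^2 \<le> (\<Sum>i<n. \<omega> i * (\<Sum>s<m i. (x i s - xs i s)^2))"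
    using i by (intro single_le) auto
  also have "\<dots> \<le> (\<Sum>i<n. \<omega> i * (\<Sum>s<m i. (x i s - xs i s) * (ln (x i s) - ln (xs i s))))"
    using om_pos x xs x_le1[OF x(1)] x_le1[OF xs(1)]
    by (intro sum_mono mult_left_mono ln_mono_sq) (auto simp: posK_def less_imp_le)
  also have "\<dots> = (\<Sum>i<n. \<omega> i * (\<Sum>s<m i. (x i s - xs i s) * (ln (x i s) - ln (f i s x))))
     + (\<Sum>i<n. \<omega> i * (\<Sum>s<m i. (x i s - xs i s) * (ln (f i s x) - ln (xs i s))))"
  proof -
    have "(\<Sum>i<n. \<omega> i * (\<Sum>s<m i. (x i s - xs i s) * (ln (x i s) - ln (xs i s)))) =
      (\<Sum>i<n. \<omega> i * (\<Sum>s<m i. (x i s - xs i s) * (ln (x i s) - ln (f i s x)) + (x i s - xs i s) * (ln (f i s x) - ln (xs i s))))"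
      by (intro sum.cong refl arg_cong2[where f="(*)"]) (simp add: algebra_simps)
    then show ?thesis by (simp only: sum.distrib distrib_left)
  qed
  also have "\<dots> = (\<Sum>i<n. \<omega> i * (\<Sum>s<m i. (x i s - xs i s) * (ln (x i s) - ln (f i s x))))"
    using QRE_ident[OF x(1) xs(1) fx] by simp
  also have "\<dots> \<le> (\<Sum>i<n. \<omega> i * (\<Sum>s<m i. \<bar>x i s - f i s x\<bar> / d))"
  proof (intro sum_mono mult_left_mono)
    fix i s assume i: "i \<in> {..<n}" "s \<in> {..<m i}"
    have "0 < x i s" "0 < xs i s" using x(2) xs(2) i by (auto simp: posK_def)
    moreover have "x i s \<le> 1" "xs i s \<le> 1" using x_le1[OF x(1)] x_le1[OF xs(1)] i by auto
    ultimately have "\<bar>x i s - xs i s\<bar> \<le> 1" by (simp add: abs_le_iff)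
    moreover have "\<bar>ln (x i s) - ln (f i s x)\<bar> \<le> \<bar>x i s - f i s x\<bar> / d"
      using d i by (intro ln_lip) auto
    ultimately have "\<bar>(x i s - xs i s) * (ln (x i s) - ln (f i s x))\<bar> \<le> 1 * (\<bar>x i s - f i s x\<bar> / d)"
      unfolding abs_mult by (intro mult_mono) auto
    then show "(x i s - xs i s) * (ln (x i s) - ln (f i s x)) \<le> \<bar>x i s - f i s x\<bar> / d" by simp
  next
    fix i assume "i \<in> {..<n}" then show "0 \<le> \<omega> i" using om_pos by (auto intro: less_imp_le)
  qed
  also have "\<dots> = (\<Sum>i<n. \<omega> i * (\<Sum>s<m i. \<bar>x i s - f i s x\<bar>)) / d"
    by (simp add: sum_divide_distrib[symmetric] sum_distrib_left)
  finally show ?thesis .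
qed

end


definition smS :: "nat \<Rightarrow> (nat \<Rightarrow> real) \<Rightarrow> (nat \<Rightarrow> real) \<Rightarrow> real \<Rightarrow> real" where
  "smS M a b w = (\<Sum>k<M. exp (a k * w + b k))"
definition smg :: "nat \<Rightarrow> (nat \<Rightarrow> real) \<Rightarrow> (nat \<Rightarrow> real) \<Rightarrow> nat \<Rightarrow> real \<Rightarrow> real" where
  "smg M a b s w = exp (a s * w + b s) / smS M a b w"
definition smabar :: "nat \<Rightarrow> (nat \<Rightarrow> real) \<Rightarrow> (nat \<Rightarrow> real) \<Rightarrow> real \<Rightarrow> real" where
  "smabar M a b w = (\<Sum>k<M. smg M a b k w * a k)"
definition smD1 :: "nat \<Rightarrow> (nat \<Rightarrow> real) \<Rightarrow> (nat \<Rightarrow> real) \<Rightarrow> nat \<Rightarrow> real \<Rightarrow> real" where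
  "smD1 M a b s w = smg M a b s w * (a s - smabar M a b w)"
definition smD2 :: "nat \<Rightarrow> (nat \<Rightarrow> real) \<Rightarrow> (nat \<Rightarrow> real) \<Rightarrow> nat \<Rightarrow> real \<Rightarrow> real" where
  "smD2 M a b s w = smD1 M a b s w * (a s - smabar M a b w) - smg M a b s w * (\<Sum>k<M. smD1 M a b k w * a k)"

lemma smS_pos: "M > 0 \<Longrightarrow> smS M a b w > 0"
  unfolding smS_def by (intro sum_pos) auto

lemma smg_pos: "M > 0 \<Longrightarrow> smg M a b s w > 0"
  using smS_pos by (simp add: smg_def)

lemma smg_sum: "M > 0 \<Longrightarrow> (\<Sum>k<M. smg M a b k w) = 1"
  using smS_pos[of M a b w] by (simp add: smg_def sum_divide_distrib[symmetric] smS_def)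

lemma smg_le1: assumes "M > 0" "s < M" shows "smg M a b s w \<le> 1"
proof -
  have "smg M a b s w \<le> (\<Sum>k<M. smg M a b k w)"
    using assms smg_pos by (intro member_le_sum) (auto intro: less_imp_le)
  then show ?thesis using smg_sum assms by simp
qed

lemma smS_deriv: "(smS M a b has_real_derivative (\<Sum>k<M. exp (a k * w + b k) * a k)) (at w)"
  unfolding smS_def
  by (rule DERIV_sum, rule DERIV_cong[OF DERIV_chain2[OF DERIV_exp]])
     (auto intro!: derivative_eq_intros)

lemma smg_deriv: assumes "M > 0" shows "(smg M a b s has_real_derivative smD1 M a b s w) (at w)"
proof -
  have e: "((\<lambda>w. exp (a s * w + b s)) has_real_derivative exp (a s * w + b s) * a s) (at w)"
    by (rule DERIV_cong[OF DERIV_chain2[OF DERIV_exp]]) (auto intro!: derivative_eq_intros)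
  have p: "smS M a b w > 0" using smS_pos[OF assms] .
  show ?thesis
    unfolding smg_def[abs_def]
    apply (rule DERIV_cong[OF DERIV_divide[OF e smS_deriv]])
    using p apply simp
    using p unfolding smD1_def smabar_def smg_def
    by (simp add: sum_divide_distrib[symmetric] field_simps power2_eq_square sum_distrib_left mult.assoc)
qed

lemma smabar_deriv: assumes "M > 0"
  shows "(smabar M a b has_real_derivative (\<Sum>k<M. smD1 M a b k w * a k)) (at w)"
  unfolding smabar_def[abs_def]
  by (intro DERIV_sum DERIV_cmult_right smg_deriv assms)

lemma smD1_deriv: assumes "M > 0" shows "(smD1 M a b s has_real_derivative smD2 M a b s w) (at w)"
  unfolding smD1_def[abs_def]
  apply (rule DERIV_cong[OF DERIV_mult[OF smg_deriv[OF assms] DERIV_diff[OF DERIV_const smabar_deriv[OF assms]]]])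
  by (simp add: smD2_def algebra_simps)

lemma smD1_sum: "M > 0 \<Longrightarrow> (\<Sum>s<M. smD1 M a b s w) = 0"
  unfolding smD1_def by (simp add: right_diff_distrib sum_subtractf sum_distrib_right[symmetric] smg_sum smabar_def)

lemma smD2_sum: "M > 0 \<Longrightarrow> (\<Sum>s<M. smD2 M a b s w) = 0"
proof -
  assume M: "M > 0"
  have e1: "(\<Sum>s<M. smD2 M a b s w) = (\<Sum>s<M. smD1 M a b s w * (a s - smabar M a b w))
      - (\<Sum>s<M. smg M a b s w) * (\<Sum>k<M. smD1 M a b k w * a k)"
    unfolding smD2_def by (simp add: sum_subtractf sum_distrib_right)
  have e2: "(\<Sum>s<M. smD1 M a b s w * (a s - smabar M a b w)) = (\<Sum>s<M. smD1 M a b s w * a s) - smabar M a b w * (\<Sum>s<M. smD1 M a b s w)"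
    by (simp add: right_diff_distrib sum_subtractf sum_distrib_left mult.commute)
  from e1 e2 show ?thesis using smD1_sum[OF M] smg_sum[OF M] by simp
qed

lemma smD2_bound:
  assumes M: "M > 0" and s: "s < M" and amax: "\<And>k. k < M \<Longrightarrow> \<bar>a k\<bar> \<le> amax"
  shows "\<bar>smD2 M a b s w\<bar> \<le> 6 * amax^2"
proof -
  have a0: "0 \<le> amax" using amax[OF s] by linarith
  have ab: "\<bar>smabar M a b w\<bar> \<le> amax"
  proof -
    have "\<bar>smabar M a b w\<bar> \<le> (\<Sum>k<M. smg M a b k w * \<bar>a k\<bar>)"
      unfolding smabar_def
      by (rule order_trans[OF sum_abs], intro sum_mono) (simp add: abs_mult less_imp_le smg_pos[OF M])
    also have "\<dots> \<le> (\<Sum>k<M. smg M a b k w * amax)"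
      using smg_pos[OF M] amax by (intro sum_mono mult_left_mono) (auto intro: less_imp_le)
    also have "\<dots> = amax" using smg_sum[OF M] by (simp add: sum_distrib_right[symmetric])
    finally show ?thesis .
  qed
  have dk: "\<bar>a k - smabar M a b w\<bar> \<le> 2 * amax" if "k < M" for k
    using ab amax[OF that] by linarith
  have d1: "\<bar>smD1 M a b k w\<bar> \<le> smg M a b k w * (2 * amax)" if "k < M" for k
    unfolding smD1_def abs_mult abs_of_pos[OF smg_pos[OF M]] using smg_pos[OF M, of a b k w] dk[OF that]
    by (intro mult_left_mono) auto
  have d1': "\<bar>smD1 M a b k w\<bar> \<le> 2 * amax" if "k < M" for k
  proof -
    have "smg M a b k w * (2 * amax) \<le> 1 * (2 * amax)"
      using smg_le1[OF M that, of a b w] a0 by (intro mult_right_mono) auto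
    then show ?thesis using d1[OF that] by simp
  qed
  have t2: "\<bar>\<Sum>k<M. smD1 M a b k w * a k\<bar> \<le> 2 * amax^2"
  proof -
    have "\<bar>\<Sum>k<M. smD1 M a b k w * a k\<bar> \<le> (\<Sum>k<M. smg M a b k w * (2 * amax) * amax)"
      by (rule order_trans[OF sum_abs], intro sum_mono, unfold abs_mult)
         (intro mult_mono d1 amax, auto intro: mult_nonneg_nonneg less_imp_le smg_pos[OF M] a0)
    also have "\<dots> = 2 * amax^2" using smg_sum[OF M]
      by (simp add: sum_distrib_right[symmetric] power2_eq_square)
    finally show ?thesis .
  qed
  have "\<bar>smD2 M a b s w\<bar> \<le> \<bar>smD1 M a b s w\<bar> * \<bar>a s - smabar M a b w\<bar> + smg M a b s w * \<bar>\<Sum>k<M. smD1 M a b k w * a k\<bar>"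
    unfolding smD2_def using smg_pos[OF M, of a b s w]
    by (metis (no_types, lifting) abs_mult abs_of_pos abs_triangle_ineq4)
  also have "\<dots> \<le> (2 * amax) * (2 * amax) + 1 * (2 * amax^2)"
    using d1'[OF s] dk[OF s] t2 smg_le1[OF M s, of a b w] smg_pos[OF M, of a b s w] a0
    by (intro add_mono mult_mono) auto
  finally show ?thesis by (simp add: power2_eq_square)
qed


context game
begin

lemma u_upd:
  assumes j: "j \<in> N i" and s': "s' < m j"
  shows "u i s (upd_comp mu j s' w) = u i s mu + A i j s s' * (w - mu j s')"
proof -
  have e: "upd_comp mu j s' w j' s'' = mu j' s'' + (if j' = j \<and> s'' = s' then w - mu j s' else 0)" for j' s''
    by (simp add: upd_comp_def)
  have "u i s (upd_comp mu j s' w) = u i s mu +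
      (\<Sum>j'\<in>N i. \<Sum>s''<m j'. (if j' = j \<and> s'' = s' then A i j' s s'' * (w - mu j s') else 0))"
    unfolding u_def e by (simp add: distrib_left sum.distrib if_distrib[where f="\<lambda>x. A _ _ _ _ * x"] cong: if_cong)
  also have "(\<Sum>j'\<in>N i. \<Sum>s''<m j'. (if j' = j \<and> s'' = s' then A i j' s s'' * (w - mu j s') else 0))
     = (\<Sum>j'\<in>N i. (if j' = j then A i j s s' * (w - mu j s') else 0))"
    using s' by (intro sum.cong refl) auto
  also have "\<dots> = A i j s s' * (w - mu j s')" using j by simp
  finally show ?thesis .
qed

definition aa :: "nat \<Rightarrow> nat \<Rightarrow> nat \<Rightarrow> nat \<Rightarrow> real" where
  "aa i j s' k = \<beta> * A i j k s'"
definition bb :: "nat \<Rightarrow> (nat \<Rightarrow> nat \<Rightarrow> real) \<Rightarrow> nat \<Rightarrow> nat \<Rightarrow> nat \<Rightarrow> real" where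
  "bb i mu j s' k = \<beta> * (u i k mu - A i j k s' * mu j s')"

lemma logit_upd:
  assumes j: "j \<in> N i" and s': "s' < m j"
  shows "(\<lambda>w. f i s (upd_comp mu j s' w)) = smg (m i) (aa i j s') (bb i mu j s') s"
proof
  fix w
  have ex: "exp (\<beta> * u i k (upd_comp mu j s' w)) = exp (aa i j s' k * w + bb i mu j s' k)" for k
    unfolding u_upd[OF j s'] aa_def bb_def by (simp add: algebra_simps)
  show "f i s (upd_comp mu j s' w) = smg (m i) (aa i j s') (bb i mu j s') s w"
    unfolding f_def' Z_def smg_def smS_def ex ..
qed

lemma partial2_eq:
  assumes i: "i < n" and j: "j \<in> N i" and s': "s' < m j"
  shows "partial2 (logit n m E A \<beta> i s) mu j s' = smD2 (m i) (aa i j s') (bb i mu j s') s (mu j s')"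
proof -
  have M: "m i > 0" using m_pos[OF i] .
  have "(\<lambda>z. deriv (smg (m i) (aa i j s') (bb i mu j s') s) z) = smD1 (m i) (aa i j s') (bb i mu j s') s"
    using DERIV_imp_deriv[OF smg_deriv[OF M]] by auto
  then show ?thesis
    unfolding partial2_def logit_upd[OF j s']
    using DERIV_imp_deriv[OF smD1_deriv[OF M]] by simp
qed

definition Amax :: real where
  "Amax = (\<Sum>i<n. \<Sum>j<n. \<Sum>k<m i. \<Sum>s'<m j. \<bar>A i j k s'\<bar>)"

lemma A_le_Amax:
  assumes "i < n" "j < n" "k < m i" "s' < m j"
  shows "\<bar>A i j k s'\<bar> \<le> Amax"
proof -
  have "\<bar>A i j k s'\<bar> \<le> (\<Sum>s'<m j. \<bar>A i j k s'\<bar>)" using assms by (intro member_le_sum) auto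
  also have "\<dots> \<le> (\<Sum>k<m i. \<Sum>s'<m j. \<bar>A i j k s'\<bar>)"
    using assms by (intro member_le_sum[where f="\<lambda>k. \<Sum>s'<m j. \<bar>A i j k s'\<bar>"]) (auto intro: sum_nonneg)
  also have "\<dots> \<le> (\<Sum>j<n. \<Sum>k<m i. \<Sum>s'<m j. \<bar>A i j k s'\<bar>)"
    using assms by (intro member_le_sum[where f="\<lambda>j. \<Sum>k<m i. \<Sum>s'<m j. \<bar>A i j k s'\<bar>"]) (auto intro: sum_nonneg)
  also have "\<dots> \<le> Amax"
    unfolding Amax_def
    using assms by (intro member_le_sum[where f="\<lambda>i. \<Sum>j<n. \<Sum>k<m i. \<Sum>s'<m j. \<bar>A i j k s'\<bar>"]) (auto intro: sum_nonneg)
  finally show ?thesis .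
qed

lemma Amax_nonneg: "0 \<le> Amax"
  unfolding Amax_def by (intro sum_nonneg) auto

lemma partial2_bound:
  assumes i: "i < n" and j: "j \<in> N i" and s': "s' < m j" and s: "s < m i"
  shows "\<bar>partial2 (logit n m E A \<beta> i s) mu j s'\<bar> \<le> 6 * (\<beta> * Amax)^2"
  unfolding partial2_eq[OF i j s']
proof (rule smD2_bound[OF m_pos[OF i] s])
  fix k assume k: "k < m i"
  show "\<bar>aa i j s' k\<bar> \<le> \<beta> * Amax"
    unfolding aa_def abs_mult abs_of_pos[OF beta_pos] using beta_pos A_le_Amax[OF i N_lt[OF j] k s']
    by (intro mult_left_mono) auto
qed

lemma partial2_sum:
  assumes i: "i < n" and j: "j \<in> N i" and s': "s' < m j"
  shows "(\<Sum>s<m i. partial2 (logit n m E A \<beta> i s) mu j s') = 0"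
  unfolding partial2_eq[OF i j s'] using smD2_sum[OF m_pos[OF i]] .

end


lemma common_subseq:
  fixes X :: "nat \<Rightarrow> 'k \<Rightarrow> real"
  assumes "finite K" and bnd: "\<And>k j. k \<in> K \<Longrightarrow> \<bar>X j k\<bar> \<le> C"
  shows "\<exists>r. strict_mono r \<and> (\<forall>k\<in>K. convergent (\<lambda>j. X (r j) k))"
  using assms
proof (induction K rule: finite_induct)
  case empty
  show ?case by (rule exI[of _ id]) (auto simp: strict_mono_def)
next
  case (insert k K)
  have bK: "\<And>k j. k \<in> K \<Longrightarrow> \<bar>X j k\<bar> \<le> C" using insert.prems by blast
  have bk: "\<And>j. \<bar>X j k\<bar> \<le> C" using insert.prems by blast
  obtain r where r: "strict_mono r" "\<forall>k\<in>K. convergent (\<lambda>j. X (r j) k)"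
    using insert.IH[OF bK] by blast
  obtain r2 where r2: "strict_mono r2" "monoseq (\<lambda>j. X (r (r2 j)) k)"
    using seq_monosub[of "\<lambda>j. X (r j) k"] by (auto simp: o_def)
  have "Bseq (\<lambda>j. X (r (r2 j)) k)"
    by (rule BseqI'[where K = C]) (simp add: bk)
  then have ck: "convergent (\<lambda>j. X (r (r2 j)) k)" using r2(2) Bseq_monoseq_convergent by blast
  have cK: "convergent (\<lambda>j. X (r (r2 j)) k')" if "k' \<in> K" for k'
    using convergent_subseq_convergent[OF r(2)[rule_format, OF that] r2(1)] by (simp add: o_def)
  have "strict_mono (\<lambda>j. r (r2 j))" by (rule strict_mono_compose[OF r(1) r2(1)])
  moreover have "\<forall>k'\<in>insert k K. convergent (\<lambda>j. X (r (r2 j)) k')" using ck cK by blast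
  ultimately show ?case by blast
qed

context game
begin

lemma u_bound:
  assumes "\<And>j s'. j < n \<Longrightarrow> s' < m j \<Longrightarrow> \<bar>x j s'\<bar> \<le> R" and i: "i < n" and s: "s < m i"
  shows "\<bar>u i s x\<bar> \<le> R * Amax"
proof -
  have R: "0 \<le> R" if "j < n" "s' < m j" for j s' using assms(1)[OF that] by linarith
  have "\<bar>u i s x\<bar> \<le> (\<Sum>j\<in>N i. \<Sum>s'<m j. \<bar>A i j s s'\<bar> * R)"
    unfolding u_def
    by (rule order_trans[OF sum_abs], intro sum_mono, rule order_trans[OF sum_abs], intro sum_mono)
       (auto simp: abs_mult intro!: mult_left_mono assms(1) dest: N_lt)
  also have "\<dots> \<le> (\<Sum>j<n. \<Sum>s'<m j. \<bar>A i j s s'\<bar> * R)"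
    using N_sub R by (intro sum_mono2) (auto intro!: sum_nonneg mult_nonneg_nonneg)
  also have "\<dots> = R * (\<Sum>j<n. \<Sum>s'<m j. \<bar>A i j s s'\<bar>)"
    by (simp add: sum_distrib_left sum_distrib_right mult.commute)
  also have "\<dots> \<le> R * Amax"
  proof (cases "\<exists>j<n. 0 < m j")
    case True
    then obtain j0 s0 where "j0 < n" "s0 < m j0" by auto
    then have R0: "0 \<le> R" using R by auto
    have "(\<Sum>j<n. \<Sum>s'<m j. \<bar>A i j s s'\<bar>) \<le> (\<Sum>k<m i. \<Sum>j<n. \<Sum>s'<m j. \<bar>A i j k s'\<bar>)"
      using s by (intro member_le_sum[where f = "\<lambda>k. \<Sum>j<n. \<Sum>s'<m j. \<bar>A i j k s'\<bar>"]) (auto intro: sum_nonneg)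
    also have "\<dots> = (\<Sum>j<n. \<Sum>k<m i. \<Sum>s'<m j. \<bar>A i j k s'\<bar>)" by (rule sum.swap)
    also have "\<dots> \<le> Amax" unfolding Amax_def
      using i by (intro member_le_sum[where f = "\<lambda>i. \<Sum>j<n. \<Sum>k<m i. \<Sum>s'<m j. \<bar>A i j k s'\<bar>"]) (auto intro: sum_nonneg)
    finally show ?thesis using R0 by (intro mult_left_mono)
  next
    case False
    then have "(\<Sum>j<n. \<Sum>s'<m j. \<bar>A i j s s'\<bar>) = 0" by (intro sum.neutral) auto
    then show ?thesis using i s False by auto
  qed
  finally show ?thesis .
qed

lemma f_lower:
  assumes "\<And>j s'. j < n \<Longrightarrow> s' < m j \<Longrightarrow> \<bar>x j s'\<bar> \<le> R" and i: "i < n" and s: "s < m i"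
  shows "exp (- 2 * \<beta> * R * Amax) / m i \<le> f i s x"
proof -
  have ub: "\<bar>u i k x\<bar> \<le> R * Amax" if "k < m i" for k using u_bound[OF assms(1) i that] .
  have num: "exp (- (\<beta> * R * Amax)) \<le> exp (\<beta> * u i s x)"
  proof -
    have "- (R * Amax) \<le> u i s x" using ub[OF s] by (simp add: abs_le_iff)
    then have "\<beta> * (- (R * Amax)) \<le> \<beta> * u i s x" using beta_pos by (intro mult_left_mono) auto
    then show ?thesis by (simp add: mult.assoc)
  qed
  have "Z i x \<le> (\<Sum>k<m i. exp (\<beta> * R * Amax))"
    unfolding Z_def
  proof (intro sum_mono)
    fix k assume "k \<in> {..<m i}"
    then have "\<beta> * u i k x \<le> \<beta> * (R * Amax)" using ub beta_pos by (intro mult_left_mono) (auto simp: abs_le_iff)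
    then show "exp (\<beta> * u i k x) \<le> exp (\<beta> * R * Amax)" by (simp add: mult.assoc)
  qed
  then have Zb: "Z i x \<le> m i * exp (\<beta> * R * Amax)" by simp
  have "exp (- 2 * \<beta> * R * Amax) / m i = exp (- (\<beta> * R * Amax)) / (m i * exp (\<beta> * R * Amax))"
    by (simp add: exp_minus field_simps exp_add[symmetric])
  also have "\<dots> \<le> exp (\<beta> * u i s x) / Z i x"
    using num Zb Z_pos[OF i, of x] by (intro frac_le) auto
  finally show ?thesis by (simp add: f_def')
qed

definition d0 :: real where
  "d0 = exp (- 2 * \<beta> * Amax) / (real (\<Sum>i<n. m i) + 1)"

lemma d0_pos: "d0 > 0"
proof -
  have "0 \<le> real (\<Sum>i<n. m i)" by (rule of_nat_0_le_iff)
  then have "0 < real (\<Sum>i<n. m i) + 1" by linarith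
  then show ?thesis unfolding d0_def by (intro divide_pos_pos) simp_all
qed

lemma d0_le_inv: assumes i: "i < n" shows "d0 \<le> 1 / m i"
proof -
  have "m i \<le> (\<Sum>i<n. m i)" using i by (intro member_le_sum) auto
  then have "real (m i) \<le> real (\<Sum>i<n. m i) + 1" by linarith
  moreover have "exp (- 2 * \<beta> * Amax) \<le> 1" using beta_pos Amax_nonneg by (simp add: mult_nonneg_nonneg)
  ultimately show ?thesis unfolding d0_def using m_pos[OF i]
    by (intro frac_le) auto
qed

lemma d0_le_f:
  assumes "\<And>j s'. j < n \<Longrightarrow> s' < m j \<Longrightarrow> \<bar>x j s'\<bar> \<le> 1" and i: "i < n" and s: "s < m i"
  shows "d0 \<le> f i s x"
proof -
  have "m i \<le> (\<Sum>i<n. m i)" using i by (intro member_le_sum) auto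
  then have "real (m i) \<le> real (\<Sum>i<n. m i) + 1" by linarith
  then have "d0 \<le> exp (- 2 * \<beta> * Amax) / m i"
    unfolding d0_def using m_pos[OF i] by (intro divide_left_mono) auto
  then have "d0 \<le> exp (- 2 * \<beta> * 1 * Amax) / m i" by simp
  also have "\<dots> \<le> f i s x" by (rule f_lower[OF assms])
  finally show ?thesis .
qed

definition PP :: "(nat \<Rightarrow> nat \<Rightarrow> real) set" where
  "PP = {x. in_simplices n m x \<and> (\<forall>i<n. \<forall>s<m i. d0 \<le> x i s)}"

lemma PP_posK: "x \<in> PP \<Longrightarrow> posK x"
  unfolding PP_def posK_def using d0_pos by force

lemma PP_abs1: "x \<in> PP \<Longrightarrow> j < n \<Longrightarrow> s' < m j \<Longrightarrow> \<bar>x j s'\<bar> \<le> 1"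
  using x_le1[of x] PP_posK[of x] unfolding PP_def posK_def by force

lemma f_in_PP: assumes x: "x \<in> PP" shows "(\<lambda>i s. f i s x) \<in> PP"
proof -
  have "d0 \<le> f i s x" if "i < n" "s < m i" for i s
    using d0_le_f[OF PP_abs1[OF x] that] by simp
  then show ?thesis unfolding PP_def using in_simplices_f by auto
qed

lemma PP_conv: assumes "x \<in> PP" "y \<in> PP" "0 \<le> e" "e \<le> 1"
  shows "(\<lambda>i s. x i s + e * (y i s - x i s)) \<in> PP"
proof -
  have a: "x i s + e * (y i s - x i s) = (1 - e) * x i s + e * y i s" for i s by (simp add: algebra_simps)
  have "d0 \<le> (1 - e) * x i s + e * y i s" if "i < n" "s < m i" for i s
  proof -
    have "(1 - e) * d0 + e * d0 \<le> (1 - e) * x i s + e * y i s"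
      using assms that unfolding PP_def by (intro add_mono mult_left_mono) auto
    then show ?thesis by (simp add: algebra_simps)
  qed
  moreover have "(\<Sum>s<m i. (1 - e) * x i s + e * y i s) = 1" if "i < n" for i
    using assms that unfolding PP_def in_simplices_def by (simp add: sum.distrib sum_distrib_left[symmetric])
  ultimately show ?thesis unfolding a PP_def in_simplices_def using d0_pos by (auto intro: order_trans[OF less_imp_le])
qed

lemma x0_PP: "(\<lambda>i s. 1 / real (m i)) \<in> PP"
proof -
  have "(\<Sum>s<m i. 1 / real (m i)) = 1" if "i < n" for i using m_pos[OF that] by simp
  then show ?thesis unfolding PP_def in_simplices_def using d0_le_inv by auto
qed

lemma V_tendsto:
  assumes lim: "\<And>i s. i < n \<Longrightarrow> s < m i \<Longrightarrow> ((\<lambda>k. Y k i s) \<longlongrightarrow> y i s) F" and y: "posK y"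
  shows "((\<lambda>k. V (Y k)) \<longlongrightarrow> V y) F"
proof -
  have ut: "((\<lambda>k. u i s (Y k)) \<longlongrightarrow> u i s y) F" for i s
    unfolding u_def by (intro tendsto_intros lim) (auto dest: N_lt)
  have zt: "((\<lambda>k. Z i (Y k)) \<longlongrightarrow> Z i y) F" for i
    unfolding Z_def by (intro tendsto_intros ut)
  show ?thesis
    unfolding V_def
    using y Z_pos by (intro tendsto_intros zt lim) (auto simp: posK_def intro!: less_imp_neq[symmetric])
qed

lemma Dd_ge_sq:
  assumes x: "x \<in> PP" and i: "i < n" "s < m i"
  shows "\<omega> i * (f i s x - x i s)^2 \<le> Dd x"
proof -
  have "\<omega> i * (f i s x - x i s)^2 \<le> (\<Sum>i<n. \<omega> i * (\<Sum>s<m i. (f i s x - x i s)^2))"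
    using i by (intro single_le) auto
  also have "\<dots> \<le> Dd x"
    unfolding Dd_def
    using x PP_posK[OF x] f_pos f_le1 x_le1 om_nonneg
    by (intro sum_mono mult_left_mono ln_mono_sq) (auto simp: posK_def PP_def less_imp_le)
  finally show ?thesis .
qed

lemma exists_fixed: "\<exists>x\<in>PP. \<forall>i<n. \<forall>s<m i. f i s x = x i s"
proof -
  define v0 where "v0 = Inf (V ` PP)"
  have bdd: "bdd_below (V ` PP)"
  proof (rule bdd_belowI[of _ 0])
    fix y assume "y \<in> V ` PP"
    then obtain x where x: "x \<in> PP" "y = V x" by blast
    show "0 \<le> y" using V_nonneg[OF _ PP_posK[OF x(1)]] x by (simp add: PP_def)
  qed
  have ne: "V ` PP \<noteq> {}" using x0_PP by blast
  have v0le: "v0 \<le> V x" if "x \<in> PP" for x unfolding v0_def using bdd that by (auto intro: cInf_lower)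
  have "\<forall>k. \<exists>x. x \<in> PP \<and> V x < v0 + 1 / (real k + 1)"
  proof
    fix k
    have "Inf (V ` PP) < v0 + 1 / (real k + 1)" unfolding v0_def by simp
    then have "\<exists>y\<in>V ` PP. y < v0 + 1 / (real k + 1)" by (simp only: cInf_less_iff[OF ne bdd])
    then show "\<exists>x. x \<in> PP \<and> V x < v0 + 1 / (real k + 1)" by blast
  qed
  from choice[OF this] obtain X where XX: "\<forall>k. X k \<in> PP \<and> V (X k) < v0 + 1 / (real k + 1)" by blast
  have X: "\<And>k. X k \<in> PP" "\<And>k. V (X k) < v0 + 1 / (real k + 1)" using XX by auto
  have bnd: "\<bar>(\<lambda>(i, s). X j i s) k\<bar> \<le> 1" if "k \<in> Sigma {..<n} (\<lambda>i. {..<m i})" for k j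
    using that PP_abs1[OF X(1)] by auto
  have "\<exists>r. strict_mono r \<and> (\<forall>k\<in>Sigma {..<n} (\<lambda>i. {..<m i}). convergent (\<lambda>j. (\<lambda>(i, s). X (r j) i s) k))"
    by (rule common_subseq[OF _ bnd]) auto
  then obtain r where r: "strict_mono r" "\<forall>k\<in>Sigma {..<n} (\<lambda>i. {..<m i}). convergent (\<lambda>j. (\<lambda>(i, s). X (r j) i s) k)"
    by blast
  define xh where "xh = (\<lambda>i s. lim (\<lambda>j. X (r j) i s))"
  have lim: "(\<lambda>j. X (r j) i s) \<longlonglongrightarrow> xh i s" if "i < n" "s < m i" for i s
  proof -
    have "convergent (\<lambda>j. X (r j) i s)" using r(2) that by auto
    then show ?thesis unfolding xh_def by (simp add: convergent_LIMSEQ_iff)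
  qed
  have xhPP: "xh \<in> PP"
  proof -
    have dge: "d0 \<le> xh i s" if "i < n" "s < m i" for i s
    proof (rule LIMSEQ_le_const[OF lim[OF that]])
      have "d0 \<le> X (r j) i s" for j using X(1)[of "r j"] that by (simp add: PP_def)
      then show "\<exists>N. \<forall>j\<ge>N. d0 \<le> X (r j) i s" by blast
    qed
    then have "0 \<le> xh i s" if "i < n" "s < m i" for i s using d0_pos dge[OF that] by linarith
    moreover note dge
    moreover have "(\<Sum>s<m i. xh i s) = 1" if "i < n" for i
    proof -
      have t: "(\<lambda>j. \<Sum>s<m i. X (r j) i s) \<longlonglongrightarrow> (\<Sum>s<m i. xh i s)"
        by (rule tendsto_sum) (use lim that in simp)
      have "(\<lambda>j. \<Sum>s<m i. X (r j) i s) = (\<lambda>j. 1)"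
      proof
        fix j show "(\<Sum>s<m i. X (r j) i s) = 1" using X(1)[of "r j"] that by (simp add: PP_def in_simplices_def)
      qed
      then have "(\<lambda>j. \<Sum>s<m i. X (r j) i s) \<longlonglongrightarrow> 1" by simp
      from LIMSEQ_unique[OF t this] show ?thesis .
    qed
    ultimately show ?thesis unfolding PP_def in_simplices_def by blast
  qed
  have t1: "(\<lambda>j. V (X (r j))) \<longlonglongrightarrow> V xh"
    by (rule V_tendsto[OF lim PP_posK[OF xhPP]])
  have t2: "(\<lambda>j. V (X (r j))) \<longlonglongrightarrow> v0"
  proof (rule real_tendsto_sandwich[where f = "\<lambda>j. v0" and h = "\<lambda>j. v0 + 1 / (real (r j) + 1)"])
    show "\<forall>\<^sub>F j in sequentially. v0 \<le> V (X (r j))" using v0le X(1) by auto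
    show "\<forall>\<^sub>F j in sequentially. V (X (r j)) \<le> v0 + 1 / (real (r j) + 1)" by (intro always_eventually allI) (simp add: less_imp_le X(2))
    show "(\<lambda>j. v0) \<longlonglongrightarrow> v0" by simp
    have "(\<lambda>j. 1 / (real j + 1)) \<longlonglongrightarrow> 0" using LIMSEQ_inverse_real_of_nat by (simp add: inverse_eq_divide add.commute)
    then have "(\<lambda>j. 1 / (real (r j) + 1)) \<longlonglongrightarrow> 0"
      using LIMSEQ_subseq_LIMSEQ[OF _ r(1)] by (auto simp: o_def)
    then show "(\<lambda>j. v0 + 1 / (real (r j) + 1)) \<longlonglongrightarrow> v0" using tendsto_add[of "\<lambda>j. v0" v0] by force
  qed
  have Vmin: "V xh \<le> V y" if "y \<in> PP" for y
    using LIMSEQ_unique[OF t1 t2] v0le[OF that] by simp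
  define c where "c = (\<lambda>i s. f i s xh - xh i s)"
  define yy where "yy = (\<lambda>e::real. \<lambda>i s. xh i s + e * c i s)"
  have dd: "((\<lambda>e. V (yy e)) has_real_derivative DV (yy 0) c) (at 0)"
  proof (rule V_deriv)
    fix j s' assume "j < n" "s' < m j"
    show "((\<lambda>e. yy e j s') has_real_derivative c j s') (at 0)"
      unfolding yy_def by (auto intro!: derivative_eq_intros)
  next
    fix j s' assume "j < n" "s' < m j"
    then show "yy 0 j s' > 0" using PP_posK[OF xhPP] by (simp add: yy_def posK_def)
  qed
  have y0: "yy 0 = xh" by (simp add: yy_def)
  have "DV (yy 0) c = DV xh (\<lambda>i s. 1 * (f i s xh - xh i s) + 1 * (\<lambda>i s. 0) i s)"
    by (simp add: y0 c_def)
  also have "\<dots> = - Dd xh"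
    unfolding DV_flow[OF conjunct1[OF xhPP[unfolded PP_def, simplified]]]
    by (simp add: B_def u_def)
  finally have dv: "DV (yy 0) c = - Dd xh" .
  have Dd0: "Dd xh \<le> 0"
  proof (rule ccontr)
    assume "\<not> Dd xh \<le> 0"
    then have "DV (yy 0) c < 0" using dv by simp
    from DERIV_neg_dec_right[OF dd this] obtain d where d: "d > 0" "\<And>h. h > 0 \<Longrightarrow> h < d \<Longrightarrow> V (yy (0 + h)) < V (yy 0)"
      by blast
    define h where "h = min (d / 2) 1"
    have h: "h > 0" "h < d" "h \<le> 1" using d by (auto simp: h_def)
    have "yy h \<in> PP" unfolding yy_def c_def
      using PP_conv[OF xhPP f_in_PP[OF xhPP], of h] h by simp
    then have "V xh \<le> V (yy h)" by (rule Vmin)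
    moreover have "V (yy h) < V xh" using d(2)[OF h(1,2)] y0 by simp
    ultimately show False by simp
  qed
  have "f i s xh = xh i s" if "i < n" "s < m i" for i s
  proof -
    have "\<omega> i * (f i s xh - xh i s)^2 \<le> 0" using Dd_ge_sq[OF xhPP that] Dd0 by simp
    then have "(f i s xh - xh i s)^2 \<le> 0" using om_pos[OF that(1)]
      by (simp add: mult_le_0_iff)
    then show ?thesis by simp
  qed
  then show ?thesis using xhPP by blast
qed

lemma f_rs: "f i s (rs x) = f i s x"
  by (simp add: f_def' Z_def u_rs)

lemma QRE_exists_unique:
  "\<exists>xs. is_QRE n m E A \<beta> xs \<and> (\<forall>y. is_QRE n m E A \<beta> y \<longrightarrow> y = xs) \<and> xs \<in> PP"
proof -
  obtain x where x: "x \<in> PP" "\<And>i s. i < n \<Longrightarrow> s < m i \<Longrightarrow> f i s x = x i s"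
    using exists_fixed by blast
  define xs where "xs = rs x"
  have xsPP: "xs \<in> PP" using x(1) unfolding xs_def PP_def in_simplices_def rs_def by auto
  have prof: "in_profile n m xs" unfolding xs_def
    using x(1) by (intro in_profile_rs) (simp add: PP_def)
  have fx: "xs i s = f i s xs" if "i < n" "s < m i" for i s
  proof -
    have "f i s xs = f i s x" unfolding xs_def by (rule f_rs)
    moreover have "xs i s = x i s" using that by (simp add: xs_def rs_def)
    ultimately show ?thesis using x(2)[OF that] by simp
  qed
  have qre: "is_QRE n m E A \<beta> xs"
    unfolding is_QRE_def using prof fx by auto
  have uniq: "y = xs" if y: "is_QRE n m E A \<beta> y" for y
  proof -
    have yp: "in_profile n m y" and yf: "\<And>i s. i < n \<Longrightarrow> s < m i \<Longrightarrow> y i s = f i s y"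
      using y by (auto simp: is_QRE_def)
    have ys: "in_simplices n m y" using yp by (simp add: in_profile_def in_simplices_def)
    have ypos: "posK y" using yf f_pos by (simp add: posK_def)
    have y1: "\<bar>y j s'\<bar> \<le> 1" if "j < n" "s' < m j" for j s'
    proof -
      have "0 < y j s'" using ypos that by (simp add: posK_def)
      then show ?thesis using x_le1[OF ys that] by simp
    qed
    have yd: "d0 \<le> y i s" if "i < n" "s < m i" for i s
      using d0_le_f[OF y1 that] yf[OF that] by simp
    have "y i s = xs i s" if i: "i < n" "s < m i" for i s
    proof -
      have "\<omega> i * (y i s - xs i s)^2 \<le> (\<Sum>i<n. \<omega> i * (\<Sum>s<m i. \<bar>y i s - f i s y\<bar>)) / d0"
        by (rule QRE_close[OF ys ypos _ PP_posK[OF xsPP] fx d0_pos yd _ i])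
           (use xsPP yd yf in \<open>auto simp: PP_def\<close>)
      also have "\<dots> = 0" using yf by simp
      finally have "(y i s - xs i s)^2 \<le> 0" using om_pos[OF i(1)] by (simp add: mult_le_0_iff)
      then show ?thesis by simp
    qed
    moreover have "y i s = xs i s" if "\<not> (i < n \<and> s < m i)" for i s
      using that yp prof by (auto simp: in_profile_def)
    ultimately show ?thesis by (intro ext) blast
  qed
  show ?thesis using qre uniq xsPP by blast
qed

end


lemma deriv_mono:
  fixes \<phi> \<phi>' :: "real \<Rightarrow> real"
  assumes ab: "0 \<le> a" "a \<le> b"
    and d: "\<And>t. a \<le> t \<Longrightarrow> t \<le> b \<Longrightarrow> (\<phi> has_real_derivative \<phi>' t) (at t within {0..})"
    and nn: "\<And>t. a < t \<Longrightarrow> t < b \<Longrightarrow> 0 \<le> \<phi>' t"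
  shows "\<phi> a \<le> \<phi> b"
proof (rule DERIV_nonneg_imp_increasing_open[OF ab(2)])
  fix t assume t: "a < t" "t < b"
  have "t \<in> interior {0..}" using t ab by auto
  then have "at t within {0..} = at t" by (rule at_within_interior)
  then show "\<exists>y. DERIV \<phi> t :> y \<and> 0 \<le> y" using d[of t] nn[OF t] t by auto
next
  show "continuous_on {a..b} \<phi>"
    unfolding continuous_on_eq_continuous_within
  proof
    fix t assume t: "t \<in> {a..b}"
    have "continuous (at t within {0..}) \<phi>" using d t by (intro DERIV_continuous) auto
    then show "continuous (at t within {a..b}) \<phi>" by (rule continuous_within_subset) (use ab in auto)
  qed
qed

lemma deriv_const:
  fixes \<phi> \<phi>' :: "real \<Rightarrow> real"
  assumes ab: "0 \<le> a" "a \<le> b"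
    and d: "\<And>t. a \<le> t \<Longrightarrow> t \<le> b \<Longrightarrow> (\<phi> has_real_derivative \<phi>' t) (at t within {0..})"
    and z: "\<And>t. a < t \<Longrightarrow> t < b \<Longrightarrow> \<phi>' t = 0"
  shows "\<phi> a = \<phi> b"
proof -
  have "\<phi> a \<le> \<phi> b" by (rule deriv_mono[OF ab d]) (use z in fastforce)+
  moreover have "- \<phi> a \<le> - \<phi> b"
    by (rule deriv_mono[OF ab, of "\<lambda>t. - \<phi> t" "\<lambda>t. - \<phi>' t"]) (auto intro: DERIV_minus d simp: z)
  ultimately show ?thesis by simp
qed

locale traj = game +
  fixes lam :: real and \<sigma>2 :: "nat \<Rightarrow> nat \<Rightarrow> real" and mu :: "real \<Rightarrow> nat \<Rightarrow> nat \<Rightarrow> real"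
  assumes lam: "lam \<ge> 0"
    and var_nn: "\<And>j s. j < n \<Longrightarrow> s < m j \<Longrightarrow> \<sigma>2 j s \<ge> 0"
    and sol: "mean_belief_solution n m E A \<beta> lam \<sigma>2 mu"
    and init: "in_simplices n m (mu 0)"
begin

definition gg :: "real \<Rightarrow> real" where "gg t = 1 / (lam + t + 1)"

definition pp :: "real \<Rightarrow> nat \<Rightarrow> nat \<Rightarrow> real" where
  "pp t i s = (\<Sum>j\<in>nbrs n E i. \<Sum>s'<m j.
                 partial2 (logit n m E A \<beta> i s) (mu t) j s'
                 * (((lam + 1) / (lam + t + 1))\<^sup>2 * \<sigma>2 j s'))
              / (2 * (lam + t + 1))"

definition xd :: "real \<Rightarrow> nat \<Rightarrow> nat \<Rightarrow> real" where
  "xd t i s = gg t * (f i s (mu t) - mu t i s) + 1 * pp t i s"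

lemma L_pos: "t \<ge> 0 \<Longrightarrow> lam + t + 1 > 0" using lam by linarith

lemma gg_pos: "t \<ge> 0 \<Longrightarrow> gg t > 0" using L_pos by (simp add: gg_def)

lemma Lgg: "t \<ge> 0 \<Longrightarrow> (lam + t + 1) * gg t = 1" using L_pos[of t] by (simp add: gg_def)

lemma mu_deriv:
  assumes "t \<ge> 0" "i < n" "s < m i"
  shows "((\<lambda>\<tau>. mu \<tau> i s) has_real_derivative xd t i s) (at t within {0..})"
proof -
  have "((\<lambda>\<tau>. mu \<tau> i s) has_real_derivative ((f i s (mu t) - mu t i s) / (lam + t + 1) + pp t i s)) (at t within {0..})"
    using sol assms unfolding mean_belief_solution_def pp_def by blast
  then show ?thesis by (simp add: xd_def gg_def)
qed

lemma gg_deriv: "t \<ge> 0 \<Longrightarrow> (gg has_real_derivative (- ((gg t)^2))) (at t within S)"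
  unfolding gg_def[abs_def]
  apply (rule DERIV_cong)
   apply (rule derivative_eq_intros refl | use L_pos in force)+
  using L_pos[of t] by (simp add: power2_eq_square field_simps)

lemma L_deriv: "((\<lambda>\<tau>. lam + \<tau> + 1) has_real_derivative 1) (at t within S)"
  by (auto intro!: derivative_eq_intros)

definition S2 :: real where "S2 = (\<Sum>j<n. \<Sum>s'<m j. \<sigma>2 j s')"
definition Cp :: real where "Cp = 3 * (\<beta> * Amax)^2 * (lam + 1)^2 * S2"

lemma S2_nonneg: "0 \<le> S2" unfolding S2_def using var_nn by (intro sum_nonneg) auto
lemma Cp_nonneg: "0 \<le> Cp" unfolding Cp_def using S2_nonneg by simp

lemma pp_bound:
  assumes t: "t \<ge> 0" and i: "i < n" and s: "s < m i"
  shows "\<bar>pp t i s\<bar> \<le> Cp * gg t ^ 3"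
proof -
  define w where "w = (\<lambda>j s'. ((lam + 1) / (lam + t + 1))\<^sup>2 * \<sigma>2 j s')"
  have w: "0 \<le> w j s'" if "j < n" "s' < m j" for j s' using var_nn[OF that] by (simp add: w_def)
  have "\<bar>\<Sum>j\<in>N i. \<Sum>s'<m j. partial2 (logit n m E A \<beta> i s) (mu t) j s' * w j s'\<bar>
      \<le> (\<Sum>j\<in>N i. \<Sum>s'<m j. 6 * (\<beta> * Amax)^2 * w j s')"
  proof (rule order_trans[OF sum_abs], intro sum_mono, rule order_trans[OF sum_abs], intro sum_mono)
    fix j s' assume j: "j \<in> N i" and s'': "s' \<in> {..<m j}"
    have s': "s' < m j" using s'' by simp
    show "\<bar>partial2 (logit n m E A \<beta> i s) (mu t) j s' * w j s'\<bar> \<le> 6 * (\<beta> * Amax)^2 * w j s'"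
      unfolding abs_mult abs_of_nonneg[OF w[OF N_lt[OF j] s']]
      by (intro mult_right_mono partial2_bound[OF i j s' s] w[OF N_lt[OF j] s'])
  qed
  also have "\<dots> \<le> (\<Sum>j<n. \<Sum>s'<m j. 6 * (\<beta> * Amax)^2 * w j s')"
    using N_sub w by (intro sum_mono2) (auto intro!: sum_nonneg mult_nonneg_nonneg)
  also have "\<dots> = 6 * (\<beta> * Amax)^2 * ((lam + 1) / (lam + t + 1))\<^sup>2 * S2"
    unfolding S2_def w_def by (simp add: sum_distrib_left mult.assoc)
  finally have num: "\<bar>\<Sum>j\<in>N i. \<Sum>s'<m j. partial2 (logit n m E A \<beta> i s) (mu t) j s' * w j s'\<bar>
      \<le> 6 * (\<beta> * Amax)^2 * ((lam + 1) / (lam + t + 1))\<^sup>2 * S2" .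
  have L: "lam + t + 1 > 0" using L_pos[OF t] .
  have "\<bar>pp t i s\<bar> = \<bar>\<Sum>j\<in>N i. \<Sum>s'<m j. partial2 (logit n m E A \<beta> i s) (mu t) j s' * w j s'\<bar> / (2 * (lam + t + 1))"
    unfolding pp_def w_def using L by simp
  also have "\<dots> \<le> 6 * (\<beta> * Amax)^2 * ((lam + 1) / (lam + t + 1))\<^sup>2 * S2 / (2 * (lam + t + 1))"
    using L num by (intro divide_right_mono) auto
  also have "\<dots> = Cp * gg t ^ 3"
  proof -
    define LL where "LL = lam + t + 1"
    have LL: "LL \<noteq> 0" using L by (simp add: LL_def)
    show ?thesis unfolding Cp_def gg_def LL_def[symmetric] using LL
      by (simp add: power_divide power2_eq_square power3_eq_cube field_simps)
  qed
  finally show ?thesis .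
qed

lemma pp_sum:
  assumes i: "i < n"
  shows "(\<Sum>s<m i. pp t i s) = 0"
proof -
  define w where "w = (\<lambda>j s'. ((lam + 1) / (lam + t + 1))\<^sup>2 * \<sigma>2 j s')"
  have "(\<Sum>s<m i. \<Sum>j\<in>N i. \<Sum>s'<m j. partial2 (logit n m E A \<beta> i s) (mu t) j s' * w j s')
      = (\<Sum>j\<in>N i. \<Sum>s<m i. \<Sum>s'<m j. partial2 (logit n m E A \<beta> i s) (mu t) j s' * w j s')"
    by (rule sum.swap)
  also have "\<dots> = (\<Sum>j\<in>N i. \<Sum>s'<m j. (\<Sum>s<m i. partial2 (logit n m E A \<beta> i s) (mu t) j s') * w j s')"
    by (rule sum.cong[OF refl]) (simp add: sum_distrib_right, rule sum.swap)
  also have "\<dots> = 0"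
    using partial2_sum[OF i] by simp
  finally have z: "(\<Sum>s<m i. \<Sum>j\<in>N i. \<Sum>s'<m j. partial2 (logit n m E A \<beta> i s) (mu t) j s' * w j s') = 0" .
  show ?thesis using z unfolding pp_def w_def by (simp add: sum_divide_distrib[symmetric])
qed

lemma sum_one: assumes t: "t \<ge> 0" and i: "i < n" shows "(\<Sum>s<m i. mu t i s) = 1"
proof -
  define \<phi> where "\<phi> = (\<lambda>\<tau>. (lam + \<tau> + 1) * ((\<Sum>s<m i. mu \<tau> i s) - 1))"
  have sd: "((\<lambda>\<tau>. \<Sum>s<m i. mu \<tau> i s) has_real_derivative (\<Sum>s<m i. xd \<tau> i s)) (at \<tau> within {0..})" if "\<tau> \<ge> 0" for \<tau>
    by (intro DERIV_sum mu_deriv that i) auto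
  have sxd: "(\<Sum>s<m i. xd \<tau> i s) = gg \<tau> * (1 - (\<Sum>s<m i. mu \<tau> i s))" for \<tau>
    unfolding xd_def using pp_sum[OF i, of \<tau>] f_sum[OF i, of "mu \<tau>"]
    by (simp add: sum.distrib sum_subtractf sum_distrib_left[symmetric])
  have "\<phi> 0 = \<phi> t"
  proof (rule deriv_const[OF order_refl t])
    fix \<tau> assume "0 \<le> \<tau>" "\<tau> \<le> t"
    then show "(\<phi> has_real_derivative
        (1 * ((\<Sum>s<m i. mu \<tau> i s) - 1) + (\<Sum>s<m i. xd \<tau> i s) * (lam + \<tau> + 1))) (at \<tau> within {0..})"
      unfolding \<phi>_def
      apply (intro DERIV_mult L_deriv)
      apply (rule DERIV_cong[OF DERIV_diff[OF sd DERIV_const]])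
      by auto
  next
    fix \<tau> assume "0 < \<tau>" "\<tau> < t"
    then have Lg: "(lam + \<tau> + 1) * gg \<tau> = 1" using Lgg by simp
    have "gg \<tau> * (1 - (\<Sum>s<m i. mu \<tau> i s)) * (lam + \<tau> + 1) = ((lam + \<tau> + 1) * gg \<tau>) * (1 - (\<Sum>s<m i. mu \<tau> i s))"
      by (simp add: algebra_simps)
    also have "\<dots> = 1 - (\<Sum>s<m i. mu \<tau> i s)" using Lg by simp
    finally have e: "gg \<tau> * (1 - (\<Sum>s<m i. mu \<tau> i s)) * (lam + \<tau> + 1) = 1 - (\<Sum>s<m i. mu \<tau> i s)" .
    show "1 * ((\<Sum>s<m i. mu \<tau> i s) - 1) + (\<Sum>s<m i. xd \<tau> i s) * (lam + \<tau> + 1) = 0"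
      unfolding sxd e by simp
  qed
  moreover have "\<phi> 0 = 0" using init i by (simp add: \<phi>_def in_simplices_def)
  ultimately show ?thesis using L_pos[OF t] by (simp add: \<phi>_def)
qed

lemma lower_gen:
  assumes t: "t \<ge> 0" and i: "i < n" and s: "s < m i"
    and \<kappa>: "\<And>\<tau>. \<tau> \<ge> 0 \<Longrightarrow> \<kappa> \<le> f i s (mu \<tau>)"
  shows "\<kappa> * t - Cp \<le> (lam + t + 1) * mu t i s"
proof -
  define \<psi> where "\<psi> = (\<lambda>\<tau>. (lam + \<tau> + 1) * mu \<tau> i s - \<kappa> * \<tau> - Cp * gg \<tau>)"
  have "\<psi> 0 \<le> \<psi> t"
  proof (rule deriv_mono[OF order_refl t])
    fix \<tau> assume "0 \<le> \<tau>" "\<tau> \<le> t"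
    then show "(\<psi> has_real_derivative
        (1 * mu \<tau> i s + xd \<tau> i s * (lam + \<tau> + 1) - \<kappa> * 1 - Cp * (- ((gg \<tau>)^2)))) (at \<tau> within {0..})"
      unfolding \<psi>_def
      by (intro DERIV_diff DERIV_mult L_deriv mu_deriv i s DERIV_cmult gg_deriv DERIV_ident) auto
  next
    fix \<tau> :: real assume tau: "0 < \<tau>" "\<tau> < t"
    have Lg: "(lam + \<tau> + 1) * gg \<tau> = 1" using Lgg tau by simp
    have pb: "\<bar>pp \<tau> i s\<bar> \<le> Cp * gg \<tau> ^ 3" using pp_bound tau i s by simp
    have "\<bar>(lam + \<tau> + 1) * pp \<tau> i s\<bar> \<le> (lam + \<tau> + 1) * (Cp * gg \<tau> ^ 3)"
      unfolding abs_mult abs_of_pos[OF L_pos[OF less_imp_le[OF tau(1)]]] using L_pos[of \<tau>] tau pb by (intro mult_left_mono) auto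
    also have "\<dots> = ((lam + \<tau> + 1) * gg \<tau>) * (Cp * (gg \<tau>)^2)" by (simp add: power3_eq_cube power2_eq_square algebra_simps)
    also have "\<dots> = Cp * (gg \<tau>)^2" using Lg by simp
    finally have "- (Cp * (gg \<tau>)^2) \<le> (lam + \<tau> + 1) * pp \<tau> i s" by linarith
    moreover have "xd \<tau> i s * (lam + \<tau> + 1) = f i s (mu \<tau>) - mu \<tau> i s + (lam + \<tau> + 1) * pp \<tau> i s"
    proof -
      have "xd \<tau> i s * (lam + \<tau> + 1) = ((lam + \<tau> + 1) * gg \<tau>) * (f i s (mu \<tau>) - mu \<tau> i s) + (lam + \<tau> + 1) * pp \<tau> i s"
        unfolding xd_def by (simp add: algebra_simps)
      then show ?thesis using Lg by simp
    qed
    moreover have "\<kappa> \<le> f i s (mu \<tau>)" using \<kappa> tau by simp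
    ultimately show "0 \<le> 1 * mu \<tau> i s + xd \<tau> i s * (lam + \<tau> + 1) - \<kappa> * 1 - Cp * (- ((gg \<tau>)^2))"
      by simp
  qed
  moreover have "\<psi> 0 \<ge> - Cp"
  proof -
    have "0 \<le> mu 0 i s" using init i s by (simp add: in_simplices_def)
    moreover have "gg 0 \<le> 1" using lam by (simp add: gg_def)
    ultimately have "- Cp \<le> (lam + 1) * mu 0 i s - Cp * gg 0"
      using lam Cp_nonneg by (smt (verit) mult_left_le mult_nonneg_nonneg)
    then show ?thesis by (simp add: \<psi>_def)
  qed
  moreover have "0 \<le> Cp * gg t" using Cp_nonneg gg_pos[OF t] by simp
  ultimately show ?thesis unfolding \<psi>_def by linarith
qed

end


context traj
begin

definition Mt :: real where "Mt = real (\<Sum>i<n. m i)"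
definition RR :: real where "RR = 1 + Mt * Cp"

lemma m_le_Mt: "i < n \<Longrightarrow> real (m i) \<le> Mt"
proof -
  assume i: "i < n"
  have "m i \<le> (\<Sum>i<n. m i)" using i by (intro member_le_sum) auto
  then show ?thesis unfolding Mt_def by (simp only: of_nat_le_iff)
qed

lemma Mt_nonneg: "0 \<le> Mt" unfolding Mt_def by (rule of_nat_0_le_iff)

lemma mu_lower: assumes t: "t \<ge> 0" and i: "i < n" and s: "s < m i" shows "- Cp \<le> mu t i s"
proof (cases "mu t i s \<ge> 0")
  case True then show ?thesis using Cp_nonneg by linarith
next
  case False
  have "0 * t - Cp \<le> (lam + t + 1) * mu t i s"
    by (rule lower_gen[OF t i s]) (use f_pos[OF i] in \<open>simp add: less_imp_le\<close>)
  moreover have "(lam + t + 1) * mu t i s \<le> 1 * mu t i s"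
    using False lam t by (intro mult_right_mono_neg) auto
  ultimately show ?thesis by simp
qed

lemma mu_upper: assumes t: "t \<ge> 0" and i: "i < n" and s: "s < m i" shows "mu t i s \<le> 1 + real (m i) * Cp"
proof -
  have "mu t i s + Cp \<le> (\<Sum>s<m i. mu t i s + Cp)"
  proof (rule member_le_sum[where f = "\<lambda>s. mu t i s + Cp"])
    fix x assume "x \<in> {..<m i} - {s}"
    then show "0 \<le> mu t i x + Cp" using mu_lower[OF t i, of x] by auto
  qed (use s in auto)
  also have "\<dots> = 1 + real (m i) * Cp" using sum_one[OF t i] by (simp add: sum.distrib)
  finally show ?thesis using Cp_nonneg by linarith
qed

lemma mu_abs: assumes t: "t \<ge> 0" and i: "i < n" and s: "s < m i" shows "\<bar>mu t i s\<bar> \<le> RR"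
proof -
  have "real (m i) * Cp \<le> Mt * Cp" using m_le_Mt[OF i] Cp_nonneg by (intro mult_right_mono) auto
  moreover have "0 \<le> Mt * Cp" using Mt_nonneg Cp_nonneg by simp
  moreover have "1 * Cp \<le> real (m i) * Cp" using m_pos[OF i] Cp_nonneg by (intro mult_right_mono) auto
  ultimately show ?thesis using mu_lower[OF t i s] mu_upper[OF t i s] unfolding RR_def by (simp add: abs_le_iff)
qed

definition dl :: real where "dl = exp (- 2 * \<beta> * RR * Amax) / (Mt + 1)"

lemma dl_pos: "dl > 0" unfolding dl_def using Mt_nonneg by (intro divide_pos_pos) auto

lemma dl_le_f: assumes t: "t \<ge> 0" and i: "i < n" and s: "s < m i" shows "dl \<le> f i s (mu t)"
proof -
  have "dl \<le> exp (- 2 * \<beta> * RR * Amax) / m i"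
    unfolding dl_def using m_pos[OF i] m_le_Mt[OF i] by (intro divide_left_mono) auto
  also have "\<dots> \<le> f i s (mu t)" by (rule f_lower[OF mu_abs[OF t] i s])
  finally show ?thesis .
qed

lemma dl_le1: "dl \<le> 1"
proof -
  have "exp (- 2 * \<beta> * RR * Amax) \<le> 1"
  proof -
    have "0 \<le> RR" unfolding RR_def using Mt_nonneg Cp_nonneg by simp
    then have "0 \<le> 2 * \<beta> * RR * Amax" using beta_pos Amax_nonneg by simp
    then show ?thesis by simp
  qed
  moreover have "1 \<le> Mt + 1" using Mt_nonneg by simp
  ultimately have "exp (- 2 * \<beta> * RR * Amax) \<le> Mt + 1" by linarith
  then show ?thesis unfolding dl_def using Mt_nonneg by (simp add: divide_le_eq)
qed

definition T0 :: real where "T0 = 2 * Cp / dl + lam + 1"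

lemma T0_pos: "T0 > 0" unfolding T0_def using Cp_nonneg dl_pos lam by (simp add: add_nonneg_pos)

lemma mu_ev: assumes t: "t \<ge> T0" and i: "i < n" and s: "s < m i" shows "dl / 2 \<le> mu t i s"
proof -
  have t0: "t \<ge> 0" using t T0_pos by simp
  have low: "dl * t - Cp \<le> (lam + t + 1) * mu t i s"
    by (rule lower_gen[OF t0 i s]) (rule dl_le_f[OF _ i s])
  have "dl * T0 \<le> dl * t" using t dl_pos by (intro mult_left_mono) auto
  moreover have "dl * T0 = 2 * Cp + dl * (lam + 1)" unfolding T0_def using dl_pos by (simp add: field_simps)
  ultimately have "(lam + t + 1) * dl \<le> 2 * (dl * t - Cp)" by (simp add: algebra_simps)
  then have "(lam + t + 1) * (dl / 2) \<le> dl * t - Cp" by simp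
  then have "(lam + t + 1) * (dl / 2) \<le> (lam + t + 1) * mu t i s" using low by linarith
  then show ?thesis using L_pos[OF t0] by simp
qed

lemma mu_props:
  assumes t: "t \<ge> T0"
  shows "in_simplices n m (mu t)" "posK (mu t)"
    "\<And>i s. i < n \<Longrightarrow> s < m i \<Longrightarrow> dl / 2 \<le> mu t i s"
    "\<And>i s. i < n \<Longrightarrow> s < m i \<Longrightarrow> dl / 2 \<le> f i s (mu t)"
    "\<And>i s. i < n \<Longrightarrow> s < m i \<Longrightarrow> mu t i s \<le> 1"
proof -
  have t0: "t \<ge> 0" using t T0_pos by simp
  have h: "0 < dl / 2" using dl_pos by simp
  show pos: "posK (mu t)" unfolding posK_def using mu_ev[OF t] h by (meson less_le_trans)
  have "0 \<le> mu t i s" if "i < n" "s < m i" for i s using pos that unfolding posK_def by (meson less_imp_le)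
  then show sx: "in_simplices n m (mu t)" unfolding in_simplices_def using sum_one[OF t0] by blast
  show "\<And>i s. i < n \<Longrightarrow> s < m i \<Longrightarrow> dl / 2 \<le> mu t i s" by (rule mu_ev[OF t])
  show "\<And>i s. i < n \<Longrightarrow> s < m i \<Longrightarrow> dl / 2 \<le> f i s (mu t)"
  proof -
    fix i s assume "i < n" "s < m i"
    moreover have "dl / 2 \<le> dl" using dl_pos by simp
    ultimately show "dl / 2 \<le> f i s (mu t)" using dl_le_f[OF t0] by (meson order_trans)
  qed
  show "\<And>i s. i < n \<Longrightarrow> s < m i \<Longrightarrow> mu t i s \<le> 1" by (rule x_le1[OF sx])
qed

end


context traj
begin

lemma xd_eq: "xd t = (\<lambda>i s. gg t * (f i s (mu t) - mu t i s) + 1 * pp t i s)"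
  by (intro ext) (simp add: xd_def)

definition Lam :: real where "Lam = - ln (dl / 2)"

lemma Lam_nonneg: "0 \<le> Lam"
  unfolding Lam_def using dl_pos dl_le1 by simp

lemma ln_abs_le: assumes "dl / 2 \<le> x" "x \<le> 1" shows "\<bar>ln x\<bar> \<le> Lam"
proof -
  have x0: "0 < x" using assms dl_pos by linarith
  have "ln x \<le> 0" using assms x0 by simp
  moreover have "ln (dl / 2) \<le> ln x" using assms dl_pos by simp
  ultimately show ?thesis unfolding Lam_def by linarith
qed

definition K2 :: real where "K2 = (\<beta> * Amax + Lam + 1) * Cp * (\<Sum>i<n. \<omega> i * real (m i))"

lemma K2_nonneg: "0 \<le> K2"
  unfolding K2_def using beta_pos Amax_nonneg Lam_nonneg Cp_nonneg
  by (intro mult_nonneg_nonneg wsum_nonneg add_nonneg_nonneg) auto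

definition pert :: "real \<Rightarrow> real" where
  "pert t = \<beta> * B (\<lambda>i s. f i s (mu t)) (pp t) + (\<Sum>i<n. \<omega> i * (\<Sum>s<m i. pp t i s * (ln (mu t i s) + 1)))"

lemma pert_bound: assumes t: "t \<ge> T0" shows "pert t \<le> K2 * gg t ^ 3"
proof -
  have t0: "t \<ge> 0" using t T0_pos by simp
  define C where "C = (\<beta> * Amax + Lam + 1) * (Cp * gg t ^ 3)"
  have pe: "pert t = (\<Sum>i<n. \<omega> i * (\<Sum>s<m i. \<beta> * (f i s (mu t) * u i s (pp t)) + pp t i s * (ln (mu t i s) + 1)))"
    unfolding pert_def B_def by (simp add: sum.distrib sum_distrib_left algebra_simps)
  have tm: "\<beta> * (f i s (mu t) * u i s (pp t)) + pp t i s * (ln (mu t i s) + 1) \<le> C"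
    if i: "i < n" "s < m i" for i s
  proof -
    have pb: "\<bar>pp t j s'\<bar> \<le> Cp * gg t ^ 3" if "j < n" "s' < m j" for j s' by (rule pp_bound[OF t0 that])
    have ub: "\<bar>u i s (pp t)\<bar> \<le> Cp * gg t ^ 3 * Amax" by (rule u_bound[OF pb i])
    have f01: "0 < f i s (mu t)" "f i s (mu t) \<le> 1" using f_pos[OF i(1)] f_le1[OF i] by auto
    have "\<bar>f i s (mu t) * u i s (pp t)\<bar> \<le> 1 * (Cp * gg t ^ 3 * Amax)"
      unfolding abs_mult using f01 ub by (intro mult_mono) auto
    then have a1: "\<beta> * (f i s (mu t) * u i s (pp t)) \<le> \<beta> * (Cp * gg t ^ 3 * Amax)"
      using beta_pos by (intro mult_left_mono) (auto simp: abs_le_iff)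
    have la: "\<bar>ln (mu t i s) + 1\<bar> \<le> Lam + 1"
      using ln_abs_le[OF mu_props(3)[OF t i] mu_props(5)[OF t i]] by linarith
    have "\<bar>pp t i s * (ln (mu t i s) + 1)\<bar> \<le> (Cp * gg t ^ 3) * (Lam + 1)"
      unfolding abs_mult using pb[OF i] la by (intro mult_mono) auto
    then have a2: "pp t i s * (ln (mu t i s) + 1) \<le> (Cp * gg t ^ 3) * (Lam + 1)" by (simp add: abs_le_iff)
    show ?thesis using a1 a2 unfolding C_def by (simp add: algebra_simps)
  qed
  have "pert t \<le> (\<Sum>i<n. \<omega> i * (\<Sum>s<m i. C))"
    unfolding pe using tm om_nonneg by (intro sum_mono mult_left_mono) auto
  also have "\<dots> = K2 * gg t ^ 3"
    unfolding K2_def C_def by (simp add: sum.distrib sum_distrib_left sum_distrib_right algebra_simps)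
  finally show ?thesis .
qed

lemma V_deriv_traj:
  assumes t: "t \<ge> T0"
  shows "((\<lambda>\<tau>. V (mu \<tau>)) has_real_derivative (- gg t * Dd (mu t) + pert t)) (at t within {0..})"
proof -
  have t0: "t \<ge> 0" using t T0_pos by simp
  have "((\<lambda>\<tau>. V (mu \<tau>)) has_real_derivative DV (mu t) (xd t)) (at t within {0..})"
  proof (rule V_deriv)
    fix j s' assume "j < n" "s' < m j"
    then show "((\<lambda>\<tau>. mu \<tau> j s') has_real_derivative xd t j s') (at t within {0..})"
      by (rule mu_deriv[OF t0])
  next
    fix j s' assume "j < n" "s' < m j"
    then show "mu t j s' > 0" using mu_props(2)[OF t] by (simp add: posK_def)
  qed
  moreover have "DV (mu t) (xd t) = - gg t * Dd (mu t) + pert t"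
    unfolding xd_eq DV_flow[OF mu_props(1)[OF t]] pert_def by simp
  ultimately show ?thesis by simp
qed

definition Phi0 :: real where "Phi0 = (lam + T0 + 1) * V (mu T0) + K2 * gg T0"

lemma V_decay: assumes t: "t \<ge> T0" shows "V (mu t) \<le> Phi0 * gg t"
proof -
  have T00: "T0 \<ge> 0" using T0_pos by simp
  define \<Phi> where "\<Phi> = (\<lambda>\<tau>. - ((lam + \<tau> + 1) * V (mu \<tau>) + K2 * gg \<tau>))"
  have "\<Phi> T0 \<le> \<Phi> t"
  proof (rule deriv_mono[OF T00 t])
    fix \<tau> assume "T0 \<le> \<tau>" "\<tau> \<le> t"
    then have tau: "\<tau> \<ge> T0" "\<tau> \<ge> 0" using T0_pos by auto
    show "(\<Phi> has_real_derivative
       (- ((1 * V (mu \<tau>) + (- gg \<tau> * Dd (mu \<tau>) + pert \<tau>) * (lam + \<tau> + 1)) + K2 * (- ((gg \<tau>)^2))))) (at \<tau> within {0..})"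
      unfolding \<Phi>_def
      by (intro DERIV_minus DERIV_add DERIV_mult L_deriv V_deriv_traj[OF tau(1)] DERIV_cmult gg_deriv[OF tau(2)])
  next
    fix \<tau> assume tau': "T0 < \<tau>" "\<tau> < t"
    then have tau: "\<tau> \<ge> T0" "\<tau> \<ge> 0" using T0_pos by auto
    have Lg: "(lam + \<tau> + 1) * gg \<tau> = 1" using Lgg[OF tau(2)] .
    have Lp: "0 < lam + \<tau> + 1" using L_pos[OF tau(2)] .
    have "pert \<tau> * (lam + \<tau> + 1) \<le> K2 * gg \<tau> ^ 3 * (lam + \<tau> + 1)"
      using pert_bound[OF tau(1)] Lp by (intro mult_right_mono) auto
    also have "\<dots> = ((lam + \<tau> + 1) * gg \<tau>) * (K2 * (gg \<tau>)^2)" by (simp add: power3_eq_cube power2_eq_square algebra_simps)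
    also have "\<dots> = K2 * (gg \<tau>)^2" using Lg by simp
    finally have p1: "pert \<tau> * (lam + \<tau> + 1) \<le> K2 * (gg \<tau>)^2" .
    have p2: "(- gg \<tau> * Dd (mu \<tau>)) * (lam + \<tau> + 1) = - Dd (mu \<tau>)"
    proof -
      have "(- gg \<tau> * Dd (mu \<tau>)) * (lam + \<tau> + 1) = - (((lam + \<tau> + 1) * gg \<tau>) * Dd (mu \<tau>))" by (simp add: algebra_simps)
      then show ?thesis using Lg by simp
    qed
    have p3: "V (mu \<tau>) \<le> Dd (mu \<tau>)" by (rule Dd_ge_V[OF mu_props(1,2)[OF tau(1)]])
    show "0 \<le> - ((1 * V (mu \<tau>) + (- gg \<tau> * Dd (mu \<tau>) + pert \<tau>) * (lam + \<tau> + 1)) + K2 * (- ((gg \<tau>)^2)))"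
    proof -
      have p4: "K2 * (- ((gg \<tau>)^2)) = - (K2 * (gg \<tau>)^2)" by simp
      have p5: "(- gg \<tau> * Dd (mu \<tau>) + pert \<tau>) * (lam + \<tau> + 1) = (- gg \<tau> * Dd (mu \<tau>)) * (lam + \<tau> + 1) + pert \<tau> * (lam + \<tau> + 1)"
        by (rule distrib_right)
      show ?thesis unfolding p4 p5 p2 using p1 p3 by linarith
    qed
  qed
  then have "(lam + t + 1) * V (mu t) + K2 * gg t \<le> Phi0" unfolding \<Phi>_def Phi0_def by simp
  moreover have "0 \<le> K2 * gg t" using K2_nonneg gg_pos[of t] t T0_pos by simp
  ultimately have "(lam + t + 1) * V (mu t) \<le> Phi0" by linarith
  then have "((lam + t + 1) * V (mu t)) * gg t \<le> Phi0 * gg t"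
    using gg_pos[of t] t T0_pos by (intro mult_right_mono) auto
  moreover have "((lam + t + 1) * V (mu t)) * gg t = V (mu t)"
  proof -
    have "((lam + t + 1) * V (mu t)) * gg t = ((lam + t + 1) * gg t) * V (mu t)" by (simp add: algebra_simps)
    then show ?thesis using Lgg[of t] t T0_pos by simp
  qed
  ultimately show ?thesis by simp
qed

lemma gg_tendsto: "(gg \<longlongrightarrow> 0) at_top"
proof -
  have "filterlim (\<lambda>t::real. (lam + 1) + t) at_top at_top"
    by (rule filterlim_tendsto_add_at_top[OF tendsto_const filterlim_ident])
  then have "((\<lambda>t. inverse ((lam + 1) + t)) \<longlongrightarrow> 0) at_top" by (rule tendsto_inverse_0_at_top)
  moreover have "gg = (\<lambda>t. inverse ((lam + 1) + t))" by (intro ext) (simp add: gg_def inverse_eq_divide add_ac)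
  ultimately show ?thesis by simp
qed

lemma V_tendsto0: "((\<lambda>t. V (mu t)) \<longlongrightarrow> 0) at_top"
proof (rule real_tendsto_sandwich[where f = "\<lambda>t. 0" and h = "\<lambda>t. Phi0 * gg t"])
  show "\<forall>\<^sub>F t in at_top. 0 \<le> V (mu t)"
    using eventually_ge_at_top[of T0] by eventually_elim (rule V_nonneg[OF mu_props(1,2)])
  show "\<forall>\<^sub>F t in at_top. V (mu t) \<le> Phi0 * gg t"
    using eventually_ge_at_top[of T0] by eventually_elim (rule V_decay)
  show "((\<lambda>t. 0) \<longlongrightarrow> 0) at_top" by simp
  show "((\<lambda>t. Phi0 * gg t) \<longlongrightarrow> 0) at_top" using tendsto_mult_right_zero[OF gg_tendsto] by simp
qed

lemma converge:
  assumes xs: "xs \<in> PP" and fx: "\<And>i s. i < n \<Longrightarrow> s < m i \<Longrightarrow> xs i s = f i s xs"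
    and i: "i < n" and s: "s < m i"
  shows "((\<lambda>t. mu t i s) \<longlongrightarrow> xs i s) at_top"
proof -
  define h where "h = (\<lambda>v. (\<Sum>j<n. \<omega> j * (\<Sum>s<m j. 2 * sqrt (v / \<omega> j))) / (dl / 2) / \<omega> i)"
  have sq_le: "(mu t i s - xs i s)^2 \<le> h (V (mu t))" if t: "t \<ge> T0" for t
  proof -
    have dif: "\<bar>mu t j s' - f j s' (mu t)\<bar> \<le> 2 * sqrt (V (mu t) / \<omega> j)" if js: "j < n" "s' < m j" for j s'
    proof -
      have "\<omega> j * (mu t j s' - f j s' (mu t))^2 / 4 \<le> V (mu t)"
        by (rule V_ge_sq[OF mu_props(1,2)[OF t] js])
      then have "(mu t j s' - f j s' (mu t))^2 \<le> 4 * (V (mu t) / \<omega> j)"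
        using om_pos[OF js(1)] by (simp add: field_simps)
      then have "sqrt ((mu t j s' - f j s' (mu t))^2) \<le> sqrt (4 * (V (mu t) / \<omega> j))"
        by (rule real_sqrt_le_mono)
      moreover have "sqrt (4 * (V (mu t) / \<omega> j)) = sqrt 4 * sqrt (V (mu t) / \<omega> j)"
        by (rule real_sqrt_mult)
      moreover have "sqrt 4 = (2::real)" by (rule real_sqrt_unique) auto
      ultimately show ?thesis by simp
    qed
    have "\<omega> i * (mu t i s - xs i s)^2 \<le> (\<Sum>j<n. \<omega> j * (\<Sum>s<m j. \<bar>mu t j s - f j s (mu t)\<bar>)) / (dl / 2)"
      by (rule QRE_close[OF mu_props(1,2)[OF t] _ PP_posK[OF xs] fx _ mu_props(3,4)[OF t] i s])
         (use xs dl_pos in \<open>auto simp: PP_def\<close>)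
    also have "\<dots> \<le> (\<Sum>j<n. \<omega> j * (\<Sum>s<m j. 2 * sqrt (V (mu t) / \<omega> j))) / (dl / 2)"
      using dl_pos dif om_nonneg by (intro divide_right_mono sum_mono mult_left_mono) auto
    finally have "\<omega> i * (mu t i s - xs i s)^2 \<le> (\<Sum>j<n. \<omega> j * (\<Sum>s<m j. 2 * sqrt (V (mu t) / \<omega> j))) / (dl / 2)" .
    then show ?thesis unfolding h_def pos_le_divide_eq[OF om_pos[OF i]] by (simp add: mult.commute)
  qed
  have h0: "((\<lambda>t. h (V (mu t))) \<longlongrightarrow> h 0) at_top"
    unfolding h_def
    apply (intro tendsto_intros V_tendsto0)
      apply (metis lessThan_iff less_irrefl om_pos)
    using dl_pos apply simp
    using om_pos[OF i] by simp
  have "h 0 = 0" by (simp add: h_def)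
  have sq0: "((\<lambda>t. (mu t i s - xs i s)^2) \<longlongrightarrow> 0) at_top"
  proof (rule real_tendsto_sandwich[where f = "\<lambda>t. 0" and h = "\<lambda>t. h (V (mu t))"])
    show "\<forall>\<^sub>F t in at_top. 0 \<le> (mu t i s - xs i s)^2" by simp
    show "\<forall>\<^sub>F t in at_top. (mu t i s - xs i s)^2 \<le> h (V (mu t))"
      using eventually_ge_at_top[of T0] by eventually_elim (rule sq_le)
  qed (use h0 \<open>h 0 = 0\<close> in auto)
  then have "((\<lambda>t. sqrt ((mu t i s - xs i s)^2)) \<longlongrightarrow> sqrt 0) at_top" by (rule tendsto_real_sqrt)
  then have "((\<lambda>t. \<bar>mu t i s - xs i s\<bar>) \<longlongrightarrow> 0) at_top" by simp
  then have "((\<lambda>t. mu t i s - xs i s) \<longlongrightarrow> 0) at_top" by (simp only: tendsto_rabs_zero_iff)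
  then show ?thesis by (simp only: LIM_zero_iff)
qed

end


theorem theorem4:
  fixes n :: nat and m :: "nat \<Rightarrow> nat" and E :: "nat \<Rightarrow> nat \<Rightarrow> bool"
    and A :: "nat \<Rightarrow> nat \<Rightarrow> nat \<Rightarrow> nat \<Rightarrow> real"
    and \<beta> lam :: real and \<sigma>2 :: "nat \<Rightarrow> nat \<Rightarrow> real"
  assumes strat_nonempty: "\<forall>i<n. m i > 0"
    and sym: "\<forall>i j. E i j \<longrightarrow> E j i"
    and irrefl: "\<forall>i. \<not> E i i"
    and comp: "competitive n m E A"
    and beta: "\<beta> > 0" and lam: "lam \<ge> 0"
    and var_nonneg: "\<forall>j<n. \<forall>s<m j. \<sigma>2 j s \<ge> 0"
  shows "\<exists>xstar. is_QRE n m E A \<beta> xstar \<and> (\<forall>y. is_QRE n m E A \<beta> y \<longrightarrow> y = xstar) \<and>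
     (\<forall>mu. mean_belief_solution n m E A \<beta> lam \<sigma>2 mu \<and> in_simplices n m (mu 0) \<longrightarrow>
        (\<forall>i<n. \<forall>s<m i. ((\<lambda>t. mu t i s) \<longlongrightarrow> xstar i s) at_top))"
proof -
  from comp obtain \<omega> where om: "\<forall>i<n. \<omega> i > 0"
    and zs: "\<forall>x. in_profile n m x \<longrightarrow> (\<Sum>i<n. \<omega> i * payoff n m E A i x) = 0"
    unfolding competitive_def by blast
  interpret G: game n m E A \<beta> \<omega>
    by unfold_locales (use strat_nonempty beta om zs in auto)
  obtain xs where xs: "is_QRE n m E A \<beta> xs" "\<forall>y. is_QRE n m E A \<beta> y \<longrightarrow> y = xs" "xs \<in> G.PP"
    using G.QRE_exists_unique by blast
  have fx: "\<And>i s. i < n \<Longrightarrow> s < m i \<Longrightarrow> xs i s = logit n m E A \<beta> i s xs"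
    using xs(1) by (simp add: is_QRE_def)
  have conv: "\<forall>i<n. \<forall>s<m i. ((\<lambda>t. mu t i s) \<longlongrightarrow> xs i s) at_top"
    if mu: "mean_belief_solution n m E A \<beta> lam \<sigma>2 mu" "in_simplices n m (mu 0)" for mu
  proof -
    interpret T: traj n m E A \<beta> \<omega> lam \<sigma>2 mu
      by unfold_locales (use lam var_nonneg mu in auto)
    show ?thesis using T.converge[OF xs(3) fx] by blast
  qed
  show ?thesis using xs(1,2) conv by blast
qed

end
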